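(* Let $T$ be a tree and let a group $\Gamma$ act on $T$ by automorphisms such that the action is minimal and strongly hyperbolic. Let $e$ be an edge of $T$ and suppose $g\in\Gamma$ fixes every point of $Z_B(e)$. Then $g$ fixes every point of $Z(e)$. In particular, the fixator subgroups in $\Gamma$ of $Z_0(e)$, of $Z_B(e)$, and of $Z(e)\cap\overline{\partial T}$ coincide.
   Context: A tree $T$ has vertex set $V$ and edge set $E$ with source/range maps $s,r$ and an inversion $e\mapsto\bar e$ ($s(\bar e)=r(e)$); $d$ is the path metric on vertices. A ray is a sequence $(r_i)_{i\ge0}$ of vertices with $d(r_i,r_{i+n})=n$; two rays are cofinal if they eventually agree up to a shift of indices; $\partial T$ is the set of cofinality classes of rays. For an edge $e$: $Z_0(e)=\{v\in V: d(v,s(e))>d(v,r(e))\}$; $Z_B(e)\subseteq\partial T$ is the set of classes of rays $(r_i)$ with $r_j=s(e), r_{j+1}=r(e)$ for some $j$; $Z(e)=Z_0(e)\cup Z_B(e)$. The shadow topology on $T\cup\partial T$ (identifying $T$ with $V$) is generated by the subbase $\{Z(e): e\in E\}$; it is compact Hausdorff, and $\overline{\partial T}$ denotes the closure of $\partial T$. Automorphisms of $T$ act on $T\cup\partial T$. An automorphism is hyperbolic if it fixes no vertex and inverts no edge; such an automorphism has exactly two fixed points in $T\cup\partial T$, both in $\partial T$. An action of $\Gamma$ on $T$ is minimal if $T$ has no proper $\Gamma$-invariant subtree, and strongly hyperbolic if $\Gamma$ contains two hyperbolic automorphisms with disjoint fixed point sets. *)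

theory Defs
  imports "HOL-Analysis.Analysis" "HOL-Algebra.Group_Action"
begin

text \<open>The (oriented) edges are the ordered pairs (a,b) of adjacent
vertices; s(a,b) = a, r(a,b) = b, and the inversion is (a,b) -> (b,a).
(For a tree, which has no multiple edges, this is the same as a Serre graph.)\<close>

definition is_path :: "'v set \<Rightarrow> ('v \<Rightarrow> 'v \<Rightarrow> bool) \<Rightarrow> 'v list \<Rightarrow> bool" where
  "is_path V adj p \<longleftrightarrow> p \<noteq> [] \<and> set p \<subseteq> V \<and>
     (\<forall>i. Suc i < length p \<longrightarrow> adj (p ! i) (p ! Suc i))"

definition reduced_path :: "'v set \<Rightarrow> ('v \<Rightarrow> 'v \<Rightarrow> bool) \<Rightarrow> 'v list \<Rightarrow> bool" where
  "reduced_path V adj p \<longleftrightarrow> is_path V adj p \<and>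
     (\<forall>i. Suc (Suc i) < length p \<longrightarrow> p ! i \<noteq> p ! Suc (Suc i))"

definition is_tree :: "'v set \<Rightarrow> ('v \<Rightarrow> 'v \<Rightarrow> bool) \<Rightarrow> bool" where
  "is_tree V adj \<longleftrightarrow> V \<noteq> {} \<and>
     (\<forall>u v. adj u v \<longrightarrow> u \<in> V \<and> v \<in> V \<and> u \<noteq> v \<and> adj v u) \<and>
     (\<forall>u\<in>V. \<forall>v\<in>V. \<exists>p. is_path V adj p \<and> hd p = u \<and> last p = v) \<and>
     (\<forall>p. reduced_path V adj p \<and> hd p = last p \<longrightarrow> length p = 1)"

definition edges :: "'v set \<Rightarrow> ('v \<Rightarrow> 'v \<Rightarrow> bool) \<Rightarrow> ('v \<times> 'v) set" where
  "edges V adj = {(a, b). a \<in> V \<and> b \<in> V \<and> adj a b}"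

definition tdist :: "'v set \<Rightarrow> ('v \<Rightarrow> 'v \<Rightarrow> bool) \<Rightarrow> 'v \<Rightarrow> 'v \<Rightarrow> nat" where
  "tdist V adj u v = (LEAST n. \<exists>p. is_path V adj p \<and> hd p = u \<and> last p = v \<and> length p = Suc n)"

definition is_ray :: "'v set \<Rightarrow> ('v \<Rightarrow> 'v \<Rightarrow> bool) \<Rightarrow> (nat \<Rightarrow> 'v) \<Rightarrow> bool" where
  "is_ray V adj \<rho> \<longleftrightarrow> (\<forall>i. \<rho> i \<in> V) \<and> (\<forall>i n. tdist V adj (\<rho> i) (\<rho> (i + n)) = n)"

definition cofinal :: "(nat \<Rightarrow> 'v) \<Rightarrow> (nat \<Rightarrow> 'v) \<Rightarrow> bool" where
  "cofinal \<rho> \<sigma> \<longleftrightarrow> (\<exists>k m. \<forall>i. \<rho> (i + k) = \<sigma> (i + m))"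

definition rays :: "'v set \<Rightarrow> ('v \<Rightarrow> 'v \<Rightarrow> bool) \<Rightarrow> (nat \<Rightarrow> 'v) set" where
  "rays V adj = {\<rho>. is_ray V adj \<rho>}"

definition boundary :: "'v set \<Rightarrow> ('v \<Rightarrow> 'v \<Rightarrow> bool) \<Rightarrow> (nat \<Rightarrow> 'v) set set" where
  "boundary V adj = rays V adj // {(\<rho>, \<sigma>). \<rho> \<in> rays V adj \<and> \<sigma> \<in> rays V adj \<and> cofinal \<rho> \<sigma>}"

text \<open>Points of T \<union> \<partial>T: vertices (Inl) and boundary points (Inr).\<close>
type_synonym 'v tpoint = "'v + (nat \<Rightarrow> 'v) set"

definition points :: "'v set \<Rightarrow> ('v \<Rightarrow> 'v \<Rightarrow> bool) \<Rightarrow> 'v tpoint set" where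
  "points V adj = Inl ` V \<union> Inr ` boundary V adj"

definition Z0 :: "'v set \<Rightarrow> ('v \<Rightarrow> 'v \<Rightarrow> bool) \<Rightarrow> 'v \<times> 'v \<Rightarrow> 'v set" where
  "Z0 V adj e = {v \<in> V. tdist V adj v (fst e) > tdist V adj v (snd e)}"

definition ZB :: "'v set \<Rightarrow> ('v \<Rightarrow> 'v \<Rightarrow> bool) \<Rightarrow> 'v \<times> 'v \<Rightarrow> (nat \<Rightarrow> 'v) set set" where
  "ZB V adj e = {c \<in> boundary V adj. \<exists>\<rho>\<in>c. \<exists>j. \<rho> j = fst e \<and> \<rho> (Suc j) = snd e}"

definition Z :: "'v set \<Rightarrow> ('v \<Rightarrow> 'v \<Rightarrow> bool) \<Rightarrow> 'v \<times> 'v \<Rightarrow> 'v tpoint set" where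
  "Z V adj e = Inl ` Z0 V adj e \<union> Inr ` ZB V adj e"

text \<open>Shadow topology on T \<union> \<partial>T, generated by the subbase {Z(e)} (the whole
space is added to the subbase, as usual for subbases, to fix the topspace).\<close>
definition shadow_topology :: "'v set \<Rightarrow> ('v \<Rightarrow> 'v \<Rightarrow> bool) \<Rightarrow> 'v tpoint topology" where
  "shadow_topology V adj =
     topology_generated_by (insert (points V adj) ((Z V adj) ` edges V adj))"

definition boundary_closure :: "'v set \<Rightarrow> ('v \<Rightarrow> 'v \<Rightarrow> bool) \<Rightarrow> 'v tpoint set" where
  "boundary_closure V adj = shadow_topology V adj closure_of (Inr ` boundary V adj)"

definition is_automorphism :: "'v set \<Rightarrow> ('v \<Rightarrow> 'v \<Rightarrow> bool) \<Rightarrow> ('v \<Rightarrow> 'v) \<Rightarrow> bool" where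
  "is_automorphism V adj f \<longleftrightarrow> bij_betw f V V \<and>
     (\<forall>u\<in>V. \<forall>v\<in>V. adj (f u) (f v) \<longleftrightarrow> adj u v)"

definition act_pt :: "('v \<Rightarrow> 'v) \<Rightarrow> 'v tpoint \<Rightarrow> 'v tpoint" where
  "act_pt f x = (case x of Inl v \<Rightarrow> Inl (f v) | Inr c \<Rightarrow> Inr ((\<lambda>\<rho>. f \<circ> \<rho>) ` c))"

definition fixed_points :: "'v set \<Rightarrow> ('v \<Rightarrow> 'v \<Rightarrow> bool) \<Rightarrow> ('v \<Rightarrow> 'v) \<Rightarrow> 'v tpoint set" where
  "fixed_points V adj f = {x \<in> points V adj. act_pt f x = x}"

definition hyperbolic :: "'v set \<Rightarrow> ('v \<Rightarrow> 'v \<Rightarrow> bool) \<Rightarrow> ('v \<Rightarrow> 'v) \<Rightarrow> bool" where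
  "hyperbolic V adj f \<longleftrightarrow> is_automorphism V adj f \<and>
     (\<forall>v\<in>V. f v \<noteq> v) \<and> (\<forall>u\<in>V. \<forall>v\<in>V. adj u v \<longrightarrow> \<not> (f u = v \<and> f v = u))"

definition acts_on_tree :: "('g, 'b) monoid_scheme \<Rightarrow> 'v set \<Rightarrow> ('v \<Rightarrow> 'v \<Rightarrow> bool) \<Rightarrow> ('g \<Rightarrow> 'v \<Rightarrow> 'v) \<Rightarrow> bool" where
  "acts_on_tree G V adj \<phi> \<longleftrightarrow> is_tree V adj \<and> group_action G V \<phi> \<and>
     (\<forall>g\<in>carrier G. is_automorphism V adj (\<phi> g))"

definition subtree :: "'v set \<Rightarrow> ('v \<Rightarrow> 'v \<Rightarrow> bool) \<Rightarrow> 'v set \<Rightarrow> bool" where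
  "subtree V adj W \<longleftrightarrow> W \<noteq> {} \<and> W \<subseteq> V \<and>
     (\<forall>u\<in>W. \<forall>v\<in>W. \<exists>p. is_path W adj p \<and> hd p = u \<and> last p = v)"

definition minimal_action :: "('g, 'b) monoid_scheme \<Rightarrow> 'v set \<Rightarrow> ('v \<Rightarrow> 'v \<Rightarrow> bool) \<Rightarrow> ('g \<Rightarrow> 'v \<Rightarrow> 'v) \<Rightarrow> bool" where
  "minimal_action G V adj \<phi> \<longleftrightarrow>
     (\<forall>W. subtree V adj W \<and> (\<forall>g\<in>carrier G. \<phi> g ` W \<subseteq> W) \<longrightarrow> W = V)"

definition strongly_hyperbolic :: "('g, 'b) monoid_scheme \<Rightarrow> 'v set \<Rightarrow> ('v \<Rightarrow> 'v \<Rightarrow> bool) \<Rightarrow> ('g \<Rightarrow> 'v \<Rightarrow> 'v) \<Rightarrow> bool" where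
  "strongly_hyperbolic G V adj \<phi> \<longleftrightarrow>
     (\<exists>g\<in>carrier G. \<exists>h\<in>carrier G. hyperbolic V adj (\<phi> g) \<and> hyperbolic V adj (\<phi> h) \<and>
        fixed_points V adj (\<phi> g) \<inter> fixed_points V adj (\<phi> h) = {})"

definition fixator :: "('g, 'b) monoid_scheme \<Rightarrow> ('g \<Rightarrow> 'v \<Rightarrow> 'v) \<Rightarrow> 'v tpoint set \<Rightarrow> 'g set" where
  "fixator G \<phi> S = {g \<in> carrier G. \<forall>x\<in>S. act_pt (\<phi> g) x = x}"

end

theory Submission
  imports Defs
begin

declare upt_Suc[simp del]

definition walk :: "'v set \<Rightarrow> ('v \<Rightarrow> 'v \<Rightarrow> bool) \<Rightarrow> (nat \<Rightarrow> 'v) \<Rightarrow> nat \<Rightarrow> bool" where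
  "walk V adj w n \<longleftrightarrow> (\<forall>i\<le>n. w i \<in> V) \<and> (\<forall>i<n. adj (w i) (w (Suc i)))"

definition nbk :: "(nat \<Rightarrow> 'v) \<Rightarrow> nat \<Rightarrow> bool" where
  "nbk w n \<longleftrightarrow> (\<forall>i. i + 2 \<le> n \<longrightarrow> w i \<noteq> w (i+2))"

lemma is_path_map: "is_path V adj (map w [0..<Suc n]) \<longleftrightarrow> walk V adj w n"
proof -
  have "set (map w [0..<Suc n]) \<subseteq> V \<longleftrightarrow> (\<forall>i\<le>n. w i \<in> V)"
    by (auto simp: image_subset_iff less_Suc_eq_le)
  moreover have "(\<forall>i. Suc i < length (map w [0..<Suc n]) \<longrightarrow> adj (map w [0..<Suc n] ! i) (map w [0..<Suc n] ! Suc i))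
     \<longleftrightarrow> (\<forall>i<n. adj (w i) (w (Suc i)))"
    by (auto simp add: nth_append)
  ultimately show ?thesis unfolding is_path_def walk_def by simp
qed

lemma reduced_map: "reduced_path V adj (map w [0..<Suc n]) \<longleftrightarrow> walk V adj w n \<and> nbk w n"
proof -
  have "(\<forall>i. Suc (Suc i) < length (map w [0..<Suc n]) \<longrightarrow> map w [0..<Suc n] ! i \<noteq> map w [0..<Suc n] ! Suc (Suc i))
    \<longleftrightarrow> nbk w n"
    unfolding nbk_def by (auto simp: add_2_eq_Suc')
  then show ?thesis unfolding reduced_path_def by (simp add: is_path_map)
qed

lemma list_as_map: "p \<noteq> [] \<Longrightarrow> p = map (\<lambda>i. p ! i) [0..<Suc (length p - 1)]"
  by (simp add: map_nth)

lemma path_iff_walk: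
  "(\<exists>p. is_path V adj p \<and> hd p = u \<and> last p = v \<and> length p = Suc n) \<longleftrightarrow>
   (\<exists>w. walk V adj w n \<and> w 0 = u \<and> w n = v)"
proof
  assume "\<exists>p. is_path V adj p \<and> hd p = u \<and> last p = v \<and> length p = Suc n"
  then obtain p where p: "is_path V adj p" "hd p = u" "last p = v" "length p = Suc n" by blast
  have ne: "p \<noteq> []" using p(4) by auto
  have eq: "p = map (\<lambda>i. p ! i) [0..<Suc n]" using list_as_map[OF ne] p(4) by simp
  have "walk V adj (\<lambda>i. p ! i) n" using p(1) eq is_path_map by metis
  moreover have "p ! 0 = u" using p(2) ne by (simp add: hd_conv_nth)
  moreover have "p ! n = v" using p(3) ne p(4) by (simp add: last_conv_nth)
  ultimately show "\<exists>w. walk V adj w n \<and> w 0 = u \<and> w n = v" by blast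
next
  assume "\<exists>w. walk V adj w n \<and> w 0 = u \<and> w n = v"
  then obtain w where w: "walk V adj w n" "w 0 = u" "w n = v" by blast
  have "is_path V adj (map w [0..<Suc n])" using w(1) is_path_map by metis
  moreover have "hd (map w [0..<Suc n]) = u" using w(2) by (simp add: hd_map)
  moreover have "last (map w [0..<Suc n]) = v" using w(3) by (simp add: upt_Suc)
  ultimately show "\<exists>p. is_path V adj p \<and> hd p = u \<and> last p = v \<and> length p = Suc n"
    by (intro exI[of _ "map w [0..<Suc n]"]) simp
qed

lemma tdist_walk: "tdist V adj u v = (LEAST n. \<exists>w. walk V adj w n \<and> w 0 = u \<and> w n = v)"
  unfolding tdist_def path_iff_walk ..

lemma walk_mono: "walk V adj w n \<Longrightarrow> m \<le> n \<Longrightarrow> walk V adj w m"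
  unfolding walk_def by auto
lemma nbk_mono: "nbk w n \<Longrightarrow> m \<le> n \<Longrightarrow> nbk w m"
  unfolding nbk_def by auto
lemma walk_shift: "walk V adj w n \<Longrightarrow> i \<le> n \<Longrightarrow> walk V adj (\<lambda>k. w (i+k)) (n-i)"
  unfolding walk_def by auto
lemma nbk_shift: "nbk w n \<Longrightarrow> nbk (\<lambda>k. w (i+k)) (n-i)"
  unfolding nbk_def by (auto simp: add.assoc)
lemma nbk_rev: assumes "nbk w n" shows "nbk (\<lambda>k. w (n-k)) n"
  unfolding nbk_def
proof (intro allI impI)
  fix i assume "i + 2 \<le> n"
  then have "w (n - (i+2)) \<noteq> w (n-(i+2) + 2)" using assms unfolding nbk_def by auto
  moreover have "n - (i+2) + 2 = n - i" using \<open>i+2 \<le> n\<close> by auto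
  ultimately show "w (n - i) \<noteq> w (n - (i + 2))" by metis
qed

locale tree =
  fixes V :: "'v set" and adj :: "'v \<Rightarrow> 'v \<Rightarrow> bool"
  assumes T: "is_tree V adj"
begin

lemma adj_V: "adj u v \<Longrightarrow> u \<in> V \<and> v \<in> V" using T unfolding is_tree_def by blast
lemma adj_sym: "adj u v \<Longrightarrow> adj v u" using T unfolding is_tree_def by blast
lemma adj_ne: "adj u v \<Longrightarrow> u \<noteq> v" using T unfolding is_tree_def by blast
lemma V_ne: "V \<noteq> {}" using T unfolding is_tree_def by blast

lemma conn: "u \<in> V \<Longrightarrow> v \<in> V \<Longrightarrow> \<exists>w n. walk V adj w n \<and> w 0 = u \<and> w n = v"
proof -
  assume "u \<in> V" "v \<in> V"
  then obtain p where "is_path V adj p" "hd p = u" "last p = v" using T unfolding is_tree_def by blast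
  moreover have "length p = Suc (length p - 1)" using \<open>is_path V adj p\<close> unfolding is_path_def by auto
  ultimately have "\<exists>p. is_path V adj p \<and> hd p = u \<and> last p = v \<and> length p = Suc (length p - 1)"
    by blast
  then show ?thesis using path_iff_walk by metis
qed

lemma cyc: "walk V adj w n \<Longrightarrow> nbk w n \<Longrightarrow> w 0 = w n \<Longrightarrow> n = 0"
proof -
  assume a: "walk V adj w n" "nbk w n" "w 0 = w n"
  have "reduced_path V adj (map w [0..<Suc n])" using a reduced_map by metis
  moreover have "hd (map w [0..<Suc n]) = w 0" by (simp add: hd_map hd_upt)
  moreover have "last (map w [0..<Suc n]) = w n" by (simp add: upt_Suc)
  ultimately have "reduced_path V adj (map w [0..<Suc n]) \<and> hd (map w [0..<Suc n]) = last (map w [0..<Suc n])" using a(3) by simp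
  then have "length (map w [0..<Suc n]) = 1" using T unfolding is_tree_def by blast
  then show "n = 0" by simp
qed

lemma walk_rev: "walk V adj w n \<Longrightarrow> walk V adj (\<lambda>k. w (n-k)) n"
  unfolding walk_def
proof (intro conjI allI impI)
  fix i assume "(\<forall>i\<le>n. w i \<in> V) \<and> (\<forall>i<n. adj (w i) (w (Suc i)))" "i < n"
  then have "adj (w (n - Suc i)) (w (Suc (n - Suc i)))" by auto
  moreover have "Suc (n - Suc i) = n - i" using \<open>i<n\<close> by auto
  ultimately show "adj (w (n - i)) (w (n - Suc i))" using adj_sym by metis
qed auto

definition dist (infix "\<dd>" 60) where "dist u v = tdist V adj u v"

lemma shortest_nb:
  assumes "walk V adj w n" "w 0 = u" "w n = v" "n = tdist V adj u v"
  shows "nbk w n"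
  unfolding nbk_def
proof (intro allI impI)
  fix i assume i: "i + 2 \<le> n"
  show "w i \<noteq> w (i+2)"
  proof
    assume eq: "w i = w (i+2)"
    define w' where "w' = (\<lambda>j. if j \<le> i then w j else w (j+2))"
    have "walk V adj w' (n-2)" unfolding walk_def
    proof (intro conjI allI impI)
      fix j assume "j \<le> n - 2" then show "w' j \<in> V" using assms(1) unfolding walk_def w'_def by auto
    next
      fix j assume j: "j < n - 2"
      have A: "\<forall>k<n. adj (w k) (w (Suc k))" using assms(1) unfolding walk_def by auto
      show "adj (w' j) (w' (Suc j))"
      proof (cases "j < i")
        case True then show ?thesis using A i unfolding w'_def by auto
      next
        case False
        then have "w' j = w (j+2)" "w' (Suc j) = w (Suc (j+2))" using eq unfolding w'_def
          by (auto simp: le_Suc_eq) 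
        moreover have "j + 2 < n" using j i by auto
        ultimately show ?thesis using A by auto
      qed
    qed
    moreover have "w' 0 = u" using assms unfolding w'_def by auto
    moreover have n2: "Suc (Suc (n-2)) = n" using i by auto
    moreover have "w' (n-2) = v"
    proof (cases "n - 2 \<le> i")
      case True then have "i = n - 2" using i by auto
      then show ?thesis using eq assms(3) i n2 unfolding w'_def by auto
    next
      case False then show ?thesis using assms(3) i n2 unfolding w'_def by auto
    qed
    ultimately have "tdist V adj u v \<le> n - 2" unfolding tdist_walk by (auto intro: Least_le)
    then show False using assms(4) i by auto
  qed
qed

lemma nb_unique:
  "walk V adj w n \<Longrightarrow> nbk w n \<Longrightarrow> walk V adj w' n' \<Longrightarrow> nbk w' n' \<Longrightarrow> w 0 = w' 0 \<Longrightarrow> w n = w' n'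
   \<Longrightarrow> n = n' \<and> (\<forall>i\<le>n. w i = w' i)"
proof (induction "n + n'" arbitrary: n n' rule: less_induct)
  case less
  show ?case
  proof (cases "n = 0")
    case True
    have "w' 0 = w' n'" using less.prems(5,6) True by simp
    then have "n' = 0" using cyc[OF less.prems(3,4)] by simp
    then show ?thesis using True less.prems(5) by simp
  next
    case n0: False
    show ?thesis
    proof (cases "n' = 0")
      case True
      have "w 0 = w n" using less.prems(5,6) True by simp
      then have "n = 0" using cyc[OF less.prems(1,2)] by simp
      then show ?thesis using n0 by simp
    next
      case n'0: False
      then obtain a a' where aa: "n = Suc a" "n' = Suc a'" using n0 by (metis not0_implies_Suc)
      show ?thesis
      proof (cases "w a = w' a'")
        case True
        have h1: "walk V adj w a" by (rule walk_mono[OF less.prems(1)]) (simp add: aa)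
        have h2: "nbk w a" by (rule nbk_mono[OF less.prems(2)]) (simp add: aa)
        have h3: "walk V adj w' a'" by (rule walk_mono[OF less.prems(3)]) (simp add: aa)
        have h4: "nbk w' a'" by (rule nbk_mono[OF less.prems(4)]) (simp add: aa)
        have lt: "a + a' < n + n'" using aa by simp
        have "a = a' \<and> (\<forall>i\<le>a. w i = w' i)"
          by (rule less.hyps[OF lt h1 h2 h3 h4 less.prems(5) True])
        then show ?thesis using aa less.prems(6) by (auto simp: le_Suc_eq)
      next
        case False
        define c where "c = (\<lambda>j. if j \<le> n then w j else w' (n + n' - j))"
        have cw: "c j = w' (n+n'-j)" if "n \<le> j" "j \<le> n + n'" for j
        proof (cases "j = n")
          case True then show ?thesis using less.prems(6) unfolding c_def by simp
        next
          case False then show ?thesis using that unfolding c_def by simp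
        qed
        have W: "\<forall>i\<le>n. w i \<in> V" "\<forall>i<n. adj (w i) (w (Suc i))"
          using less.prems(1) unfolding walk_def by auto
        have W': "\<forall>i\<le>n'. w' i \<in> V" "\<forall>i<n'. adj (w' i) (w' (Suc i))"
          using less.prems(3) unfolding walk_def by auto
        have "walk V adj c (n+n')" unfolding walk_def
        proof (intro conjI allI impI)
          fix j assume "j \<le> n + n'" then show "c j \<in> V" using W W' unfolding c_def by auto
        next
          fix j assume j: "j < n + n'"
          show "adj (c j) (c (Suc j))"
          proof (cases "j < n")
            case True then show ?thesis using W unfolding c_def by auto
          next
            case False
            define m where "m = n+n'-Suc j"
            have k: "n+n'-j = Suc m" "n+n'-Suc j = m" using j unfolding m_def by arith+
            have e1: "c j = w' (Suc m)" using cw[of j] j False k by simp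
            have e2: "c (Suc j) = w' m" using cw[of "Suc j"] j False k by simp
            have "m < n'" using j False unfolding m_def by arith
            then have "adj (w' m) (w' (Suc m))" using W' by auto
            then show ?thesis using e1 e2 adj_sym by simp
          qed
        qed
        moreover have "nbk c (n+n')" unfolding nbk_def
        proof (intro allI impI)
          fix j assume j: "j + 2 \<le> n + n'"
          show "c j \<noteq> c (j+2)"
          proof (cases "j + 2 \<le> n")
            case True then show ?thesis using less.prems(2) unfolding nbk_def c_def by auto
          next
            case F1: False
            show ?thesis
            proof (cases "n \<le> j")
              case True
              define m where "m = n+n'-j-2"
              have k: "n+n'-j = m+2" "n+n'-(j+2) = m" using j unfolding m_def by arith+
              have "c j = w' (m+2)" using cw[of j] j True k by simp
              moreover have "c (j+2) = w' m" using cw[of "j+2"] j True k by simp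
              moreover have "w' m \<noteq> w' (m+2)"
                using less.prems(4) j True k unfolding nbk_def by simp
              ultimately show ?thesis by auto
            next
              case F2: False
              then have ja: "j = a" using F1 aa by auto
              have "c j = w a" using ja aa unfolding c_def by simp
              moreover have "c (j+2) = w' a'" using cw[of "j+2"] ja aa j by simp
              ultimately show ?thesis using False by simp
            qed
          qed
        qed
        moreover have "c 0 = c (n+n')" using cw[of "n+n'"] less.prems(5) unfolding c_def by simp
        ultimately have "n + n' = 0" by (rule cyc)
        then show ?thesis using n0 by auto
      qed
    qed
  qed
qed

end

context tree begin

lemma tdist_le: "walk V adj w n \<Longrightarrow> tdist V adj (w 0) (w n) \<le> n"
  unfolding tdist_walk by (rule Least_le) blast

lemma geo_ex: assumes "u \<in> V" "v \<in> V"
  shows "\<exists>w. walk V adj w (tdist V adj u v) \<and> nbk w (tdist V adj u v) \<and> w 0 = u \<and> w (tdist V adj u v) = v"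
proof -
  have ex: "\<exists>n w. walk V adj w n \<and> w 0 = u \<and> w n = v" using conn[OF assms] by blast
  have "\<exists>w. walk V adj w (tdist V adj u v) \<and> w 0 = u \<and> w (tdist V adj u v) = v"
    unfolding tdist_walk using LeastI_ex[OF ex] by blast
  then obtain w where w: "walk V adj w (tdist V adj u v)" "w 0 = u" "w (tdist V adj u v) = v" by blast
  moreover have "nbk w (tdist V adj u v)" using shortest_nb[OF w] by simp
  ultimately show ?thesis by blast
qed

lemma nb_dist: assumes "walk V adj w n" "nbk w n" shows "tdist V adj (w 0) (w n) = n"
proof -
  have V: "w 0 \<in> V" "w n \<in> V" using assms(1) unfolding walk_def by auto
  obtain w' where w': "walk V adj w' (tdist V adj (w 0) (w n))" "nbk w' (tdist V adj (w 0) (w n))"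
     "w' 0 = w 0" "w' (tdist V adj (w 0) (w n)) = w n" using geo_ex[OF V] by blast
  have "n = tdist V adj (w 0) (w n)" using nb_unique[OF assms w'(1,2) w'(3)[symmetric] w'(4)[symmetric]] by blast
  then show ?thesis by simp
qed

lemma nb_dist_sub: assumes "walk V adj w n" "nbk w n" "i \<le> j" "j \<le> n"
  shows "tdist V adj (w i) (w j) = j - i"
proof -
  have "walk V adj (\<lambda>k. w (i+k)) (j-i)" using walk_shift[OF walk_mono[OF assms(1) assms(4)] assms(3)] .
  moreover have "nbk (\<lambda>k. w (i+k)) (j-i)" using nbk_shift[OF nbk_mono[OF assms(2) assms(4)]] .
  ultimately have "tdist V adj (w (i+0)) (w (i + (j-i))) = j - i" using nb_dist by blast
  then show ?thesis using assms(3) by simp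
qed

lemma nb_unique': assumes "walk V adj w n" "nbk w n" "walk V adj w' n'" "nbk w' n'" "w 0 = w' 0" "w n = w' n'"
  "i \<le> n" shows "w i = w' i"
  using nb_unique[OF assms(1-6)] assms(7) by blast

lemma nb_unique_len: assumes "walk V adj w n" "nbk w n" "walk V adj w' n'" "nbk w' n'" "w 0 = w' 0" "w n = w' n'"
  shows "n = n'"
  using nb_unique[OF assms(1-6)] by blast

lemma walk0: "u \<in> V \<Longrightarrow> walk V adj (\<lambda>_. u) 0" unfolding walk_def by auto
lemma nbk0: "nbk w 0" unfolding nbk_def by auto
lemma nbk1: "nbk w 1" unfolding nbk_def by auto

lemma tdist_refl: "u \<in> V \<Longrightarrow> tdist V adj u u = 0"
  using nb_dist[OF walk0 nbk0, of u] by simp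

lemma tdist_sym: assumes "u \<in> V" "v \<in> V" shows "tdist V adj u v = tdist V adj v u"
proof -
  obtain w where w: "walk V adj w (tdist V adj u v)" "nbk w (tdist V adj u v)" "w 0 = u" "w (tdist V adj u v) = v"
    using geo_ex[OF assms] by blast
  have "tdist V adj ((\<lambda>k. w (tdist V adj u v - k)) 0) ((\<lambda>k. w (tdist V adj u v - k)) (tdist V adj u v)) = tdist V adj u v"
    by (rule nb_dist[OF walk_rev[OF w(1)] nbk_rev[OF w(2)]])
  then show ?thesis using w(3,4) by simp
qed

lemma tdist_zero: assumes "u \<in> V" "v \<in> V" "tdist V adj u v = 0" shows "u = v"
proof -
  obtain w where w: "walk V adj w (tdist V adj u v)" "nbk w (tdist V adj u v)" "w 0 = u" "w (tdist V adj u v) = v"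
    using geo_ex[OF assms(1,2)] by blast
  then show ?thesis using assms(3) by simp
qed

definition two :: "'v \<Rightarrow> 'v \<Rightarrow> nat \<Rightarrow> 'v" where "two u v = (\<lambda>i. if i = 0 then u else v)"

lemma tdist_adj: assumes "adj u v" shows "tdist V adj u v = 1"
proof -
  have "walk V adj (two u v) 1" using assms adj_V unfolding walk_def two_def by auto
  from nb_dist[OF this nbk1] show ?thesis by (simp add: two_def)
qed

lemma tdist_one: assumes "u \<in> V" "v \<in> V" "tdist V adj u v = 1" shows "adj u v"
proof -
  obtain w where w: "walk V adj w (tdist V adj u v)" "nbk w (tdist V adj u v)" "w 0 = u" "w (tdist V adj u v) = v"
    using geo_ex[OF assms(1,2)] by blast
  then show ?thesis using assms(3) unfolding walk_def by auto
qed

lemma tdist_tri: assumes "u \<in> V" "v \<in> V" "x \<in> V"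
  shows "tdist V adj u x \<le> tdist V adj u v + tdist V adj v x"
proof -
  obtain w where w: "walk V adj w (tdist V adj u v)" "w 0 = u" "w (tdist V adj u v) = v"
    using geo_ex[OF assms(1,2)] by blast
  obtain w' where w': "walk V adj w' (tdist V adj v x)" "w' 0 = v" "w' (tdist V adj v x) = x"
    using geo_ex[OF assms(2,3)] by blast
  define a where "a = tdist V adj u v"
  define b where "b = tdist V adj v x"
  define c where "c = (\<lambda>i. if i \<le> a then w i else w' (i - a))"
  have "walk V adj c (a + b)" unfolding walk_def
  proof (intro conjI allI impI)
    fix i assume "i \<le> a + b" then show "c i \<in> V" using w(1) w'(1) unfolding walk_def c_def a_def b_def by auto
  next
    fix i assume i: "i < a + b"
    show "adj (c i) (c (Suc i))"
    proof (cases "i < a")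
      case True then show ?thesis using w(1) unfolding walk_def c_def a_def by auto
    next
      case False
      then have "c i = w' (i - a)" using w(3) w'(2) unfolding c_def a_def by auto
      moreover have "c (Suc i) = w' (Suc (i - a))" using False unfolding c_def by (simp add: Suc_diff_le)
      moreover have "i - a < b" using i False by arith
      ultimately show ?thesis using w'(1) unfolding walk_def b_def by auto
    qed
  qed
  from tdist_le[OF this] have "tdist V adj (c 0) (c (a+b)) \<le> a + b" .
  moreover have "c 0 = u" using w(2) unfolding c_def by simp
  moreover have "c (a+b) = x"
  proof (cases "b = 0")
    case True then show ?thesis using w(3) w'(2,3) unfolding c_def a_def b_def by simp
  next
    case False then show ?thesis using w'(3) unfolding c_def b_def by simp
  qed
  ultimately show ?thesis unfolding a_def b_def by simp
qed

definition ext :: "(nat \<Rightarrow> 'v) \<Rightarrow> nat \<Rightarrow> 'v \<Rightarrow> nat \<Rightarrow> 'v" where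
  "ext w n x = (\<lambda>i. if i \<le> n then w i else x)"

lemma ext_walk: assumes "walk V adj w n" "adj (w n) x" shows "walk V adj (ext w n x) (Suc n)"
  using assms adj_V unfolding walk_def ext_def by (auto simp: le_Suc_eq less_Suc_eq)

lemma ext_nbk: assumes "nbk w n" "0 < n \<longrightarrow> w (n-1) \<noteq> x" shows "nbk (ext w n x) (Suc n)"
  unfolding nbk_def
proof (intro allI impI)
  fix i assume i: "i + 2 \<le> Suc n"
  show "ext w n x i \<noteq> ext w n x (i + 2)"
  proof (cases "i + 2 \<le> n")
    case True then show ?thesis using assms(1) unfolding nbk_def ext_def by auto
  next
    case False then have "i = n - 1" "0 < n" using i by auto
    then show ?thesis using assms(2) unfolding ext_def by auto
  qed
qed

lemma dist_step: assumes "adj p q" "v \<in> V"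
  shows "tdist V adj v q = tdist V adj v p + 1 \<or> tdist V adj v p = tdist V adj v q + 1"
proof -
  have pV: "p \<in> V" "q \<in> V" using adj_V assms by auto
  define n where "n = tdist V adj v p"
  obtain w where w: "walk V adj w n" "nbk w n" "w 0 = v" "w n = p"
    using geo_ex[OF assms(2) pV(1)] unfolding n_def by blast
  show ?thesis
  proof (cases "0 < n \<and> w (n-1) = q")
    case True
    then have "tdist V adj (w 0) (w (n-1)) = n - 1" using nb_dist_sub[OF w(1,2), of 0 "n-1"] by simp
    then show ?thesis using True w(3) unfolding n_def by auto
  next
    case False
    have "walk V adj (ext w n q) (Suc n)" using ext_walk[OF w(1)] w(4) assms(1) by simp
    moreover have "nbk (ext w n q) (Suc n)" using ext_nbk[OF w(2)] False by auto
    ultimately have "tdist V adj (ext w n q 0) (ext w n q (Suc n)) = Suc n" by (rule nb_dist)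
    then show ?thesis using w(3) unfolding ext_def n_def by simp
  qed
qed

lemma parent_unique: assumes "adj p q" "adj p r" "v \<in> V"
  "tdist V adj v q + 1 = tdist V adj v p" "tdist V adj v r + 1 = tdist V adj v p"
  shows "q = r"
proof -
  have V: "p \<in> V" "q \<in> V" "r \<in> V" using adj_V assms by auto
  define m where "m = tdist V adj v q"
  have mr: "m = tdist V adj v r" using assms(4,5) unfolding m_def by simp
  obtain w where w: "walk V adj w m" "nbk w m" "w 0 = v" "w m = q"
    using geo_ex[OF assms(3) V(2)] unfolding m_def by blast
  obtain w' where w': "walk V adj w' m" "nbk w' m" "w' 0 = v" "w' m = r"
    using geo_ex[OF assms(3) V(3)] unfolding mr by blast
  have ok: "0 < m \<longrightarrow> w (m-1) \<noteq> p" if "walk V adj w m" "nbk w m" "w 0 = v" for w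
  proof
    assume "0 < m"
    have "tdist V adj (w 0) (w (m-1)) = m - 1" using nb_dist_sub[OF that(1,2), of 0 "m-1"] by simp
    then show "w (m-1) \<noteq> p" using that(3) assms(4) unfolding m_def by auto
  qed
  have e1: "walk V adj (ext w m p) (Suc m)" "nbk (ext w m p) (Suc m)"
    using ext_walk[OF w(1)] w(4) adj_sym[OF assms(1)] ext_nbk[OF w(2) ok[OF w(1-3)]] by auto
  have e2: "walk V adj (ext w' m p) (Suc m)" "nbk (ext w' m p) (Suc m)"
    using ext_walk[OF w'(1)] w'(4) adj_sym[OF assms(2)] ext_nbk[OF w'(2) ok[OF w'(1-3)]] by auto
  have "ext w m p m = ext w' m p m"
    by (rule nb_unique'[OF e1 e2]) (use w(3) w'(3) in \<open>simp_all add: ext_def\<close>)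
  then show ?thesis using w(4) w'(4) unfolding ext_def by simp
qed

end

definition nbray :: "'v set \<Rightarrow> ('v \<Rightarrow> 'v \<Rightarrow> bool) \<Rightarrow> (nat \<Rightarrow> 'v) \<Rightarrow> bool" where
  "nbray V adj r \<longleftrightarrow> (\<forall>i. r i \<in> V) \<and> (\<forall>i. adj (r i) (r (Suc i))) \<and> (\<forall>i. r i \<noteq> r (i+2))"

lemma cofinal_refl: "cofinal r r" unfolding cofinal_def by (rule exI[of _ 0], rule exI[of _ 0]) simp
lemma cofinal_sym: "cofinal r s \<Longrightarrow> cofinal s r" unfolding cofinal_def by metis
lemma cofinal_trans: assumes "cofinal r s" "cofinal s t" shows "cofinal r t"
proof -
  obtain k m where 1: "\<forall>i. r (i+k) = s (i+m)" using assms(1) unfolding cofinal_def by blast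
  obtain k' m' where 2: "\<forall>i. s (i+k') = t (i+m')" using assms(2) unfolding cofinal_def by blast
  have "\<forall>i. r (i + (k+k')) = t (i + (m+m'))"
  proof
    fix i
    have "r (i + (k+k')) = s ((i+k') + m)" using 1[rule_format, of "i+k'"] by (simp add: ac_simps)
    also have "\<dots> = t ((i + m) + m')" using 2[rule_format, of "i+m"] by (simp add: ac_simps)
    finally show "r (i + (k+k')) = t (i + (m+m'))" by (simp add: ac_simps)
  qed
  then show ?thesis unfolding cofinal_def by blast
qed
lemma cofinal_comp: "cofinal r s \<Longrightarrow> cofinal (f \<circ> r) (f \<circ> s)" unfolding cofinal_def by (metis comp_apply)
lemma cofinal_shift: "cofinal r (\<lambda>i. r (i + k))" unfolding cofinal_def
  by (rule exI[of _ k], rule exI[of _ 0]) simp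

definition cls :: "'v set \<Rightarrow> ('v \<Rightarrow> 'v \<Rightarrow> bool) \<Rightarrow> (nat \<Rightarrow> 'v) \<Rightarrow> (nat \<Rightarrow> 'v) set" where
  "cls V adj r = {s \<in> rays V adj. cofinal r s}"

lemma cls_in_boundary: "is_ray V adj r \<Longrightarrow> cls V adj r \<in> boundary V adj"
  unfolding boundary_def cls_def quotient_def rays_def by auto

lemma boundary_cls: "c \<in> boundary V adj \<Longrightarrow> r \<in> c \<Longrightarrow> c = cls V adj r"
  unfolding boundary_def cls_def quotient_def rays_def
  by (auto intro: cofinal_trans cofinal_sym)

lemma boundary_ray: "c \<in> boundary V adj \<Longrightarrow> r \<in> c \<Longrightarrow> is_ray V adj r"
  unfolding boundary_def quotient_def rays_def by auto

lemma boundary_ne: "c \<in> boundary V adj \<Longrightarrow> \<exists>r. r \<in> c"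
  unfolding boundary_def quotient_def rays_def by (auto intro: cofinal_refl)

lemma in_cls: "is_ray V adj s \<Longrightarrow> cofinal r s \<Longrightarrow> s \<in> cls V adj r"
  unfolding cls_def rays_def by auto

lemma cls_eq: "cofinal r s \<Longrightarrow> cls V adj r = cls V adj s"
  unfolding cls_def by (auto intro: cofinal_trans cofinal_sym)

context tree begin

lemma ray_iff: "is_ray V adj r \<longleftrightarrow> nbray V adj r"
proof
  assume r: "is_ray V adj r"
  have V: "\<forall>i. r i \<in> V" using r unfolding is_ray_def by auto
  have d: "\<And>i n. tdist V adj (r i) (r (i+n)) = n" using r unfolding is_ray_def by auto
  have "\<forall>i. adj (r i) (r (Suc i))" using tdist_one V d[of _ 1] by simp
  moreover have "\<forall>i. r i \<noteq> r (i+2)"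
  proof (intro allI notI)
    fix i assume "r i = r (i+2)"
    then have "tdist V adj (r i) (r (i+2)) = 0" using tdist_refl V by simp
    then show False using d[of i 2] by simp
  qed
  ultimately show "nbray V adj r" using V unfolding nbray_def by blast
next
  assume r: "nbray V adj r"
  show "is_ray V adj r" unfolding is_ray_def
  proof (intro conjI allI)
    fix i show "r i \<in> V" using r unfolding nbray_def by auto
  next
    fix i n
    have "walk V adj (\<lambda>k. r (i+k)) n" using r unfolding nbray_def walk_def by auto
    moreover have "nbk (\<lambda>k. r (i+k)) n" using r unfolding nbray_def nbk_def by (auto simp: add.assoc)
    ultimately have "tdist V adj (r (i+0)) (r (i+n)) = n" using nb_dist by fastforce
    then show "tdist V adj (r i) (r (i + n)) = n" by simp
  qed
qed

lemma ray_V: "is_ray V adj r \<Longrightarrow> r i \<in> V" unfolding is_ray_def by auto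
lemma ray_adj: "is_ray V adj r \<Longrightarrow> adj (r i) (r (Suc i))" using ray_iff unfolding nbray_def by auto
lemma ray_nb: "is_ray V adj r \<Longrightarrow> r i \<noteq> r (i+2)" using ray_iff unfolding nbray_def by auto
lemma ray_dist: "is_ray V adj r \<Longrightarrow> tdist V adj (r i) (r (i+n)) = n" unfolding is_ray_def by auto
lemma ray_dist0: "is_ray V adj r \<Longrightarrow> tdist V adj (r 0) (r n) = n" using ray_dist[of r 0 n] by simp

lemma ray_inj: assumes "is_ray V adj r" "r i = r j" shows "i = j"
proof (rule ccontr)
  assume "i \<noteq> j"
  then consider "i < j" | "j < i" by arith
  then show False
  proof cases
    case 1 then have "tdist V adj (r i) (r (i + (j-i))) = j - i" using ray_dist[OF assms(1)] by blast
    then show ?thesis using assms 1 tdist_refl ray_V by auto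
  next
    case 2 then have "tdist V adj (r j) (r (j + (i-j))) = i - j" using ray_dist[OF assms(1)] by blast
    then show ?thesis using assms 2 tdist_refl ray_V by auto
  qed
qed

lemma ray_shift: "is_ray V adj r \<Longrightarrow> is_ray V adj (\<lambda>i. r (i + k))"
  unfolding ray_iff nbray_def by (auto simp: ac_simps)

lemma ray_walk: "is_ray V adj r \<Longrightarrow> walk V adj r n" using ray_iff unfolding nbray_def walk_def by auto
lemma ray_nbk: "is_ray V adj r \<Longrightarrow> nbk r n" using ray_iff unfolding nbray_def nbk_def by auto

lemma aut_V: "is_automorphism V adj f \<Longrightarrow> v \<in> V \<Longrightarrow> f v \<in> V"
  unfolding is_automorphism_def bij_betw_def by auto
lemma aut_inj: "is_automorphism V adj f \<Longrightarrow> u \<in> V \<Longrightarrow> v \<in> V \<Longrightarrow> f u = f v \<Longrightarrow> u = v"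
  unfolding is_automorphism_def bij_betw_def inj_on_def by auto
lemma aut_adj: "is_automorphism V adj f \<Longrightarrow> adj u v \<Longrightarrow> adj (f u) (f v)"
  using adj_V unfolding is_automorphism_def by blast
lemma aut_adj_iff: "is_automorphism V adj f \<Longrightarrow> u \<in> V \<Longrightarrow> v \<in> V \<Longrightarrow> adj (f u) (f v) \<longleftrightarrow> adj u v"
  unfolding is_automorphism_def by blast

lemma aut_walk: "is_automorphism V adj f \<Longrightarrow> walk V adj w n \<Longrightarrow> walk V adj (f \<circ> w) n"
  unfolding walk_def using aut_V aut_adj by auto
lemma aut_nbk: "is_automorphism V adj f \<Longrightarrow> walk V adj w n \<Longrightarrow> nbk w n \<Longrightarrow> nbk (f \<circ> w) n"
  unfolding nbk_def walk_def using aut_inj by fastforce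

lemma aut_dist: assumes "is_automorphism V adj f" "u \<in> V" "v \<in> V"
  shows "tdist V adj (f u) (f v) = tdist V adj u v"
proof -
  obtain w where w: "walk V adj w (tdist V adj u v)" "nbk w (tdist V adj u v)" "w 0 = u" "w (tdist V adj u v) = v"
    using geo_ex[OF assms(2,3)] by blast
  have "tdist V adj ((f \<circ> w) 0) ((f \<circ> w) (tdist V adj u v)) = tdist V adj u v"
    by (rule nb_dist[OF aut_walk[OF assms(1) w(1)] aut_nbk[OF assms(1) w(1,2)]])
  then show ?thesis using w by simp
qed

lemma aut_ray: "is_automorphism V adj f \<Longrightarrow> is_ray V adj r \<Longrightarrow> is_ray V adj (f \<circ> r)"
  unfolding is_ray_def using aut_dist aut_V by auto

lemma aut_inv: assumes "is_automorphism V adj f" shows "is_automorphism V adj (inv_into V f)"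
proof -
  have b: "bij_betw f V V" using assms unfolding is_automorphism_def by auto
  have b': "bij_betw (inv_into V f) V V" using bij_betw_inv_into[OF b] .
  have "\<forall>u\<in>V. \<forall>v\<in>V. adj (inv_into V f u) (inv_into V f v) \<longleftrightarrow> adj u v"
  proof (intro ballI)
    fix u v assume uv: "u \<in> V" "v \<in> V"
    have iv: "inv_into V f u \<in> V" "inv_into V f v \<in> V" using b' uv bij_betwE by blast+
    have "adj (f (inv_into V f u)) (f (inv_into V f v)) \<longleftrightarrow> adj (inv_into V f u) (inv_into V f v)"
      using assms iv unfolding is_automorphism_def by blast
    moreover have "f (inv_into V f u) = u" "f (inv_into V f v) = v"
      using b uv by (auto simp: bij_betw_inv_into_right)
    ultimately show "adj (inv_into V f u) (inv_into V f v) \<longleftrightarrow> adj u v" by simp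
  qed
  then show ?thesis using b' unfolding is_automorphism_def by blast
qed

lemma aut_inv_right: "is_automorphism V adj f \<Longrightarrow> v \<in> V \<Longrightarrow> f (inv_into V f v) = v"
  unfolding is_automorphism_def by (auto simp: bij_betw_inv_into_right)
lemma aut_inv_left: "is_automorphism V adj f \<Longrightarrow> v \<in> V \<Longrightarrow> inv_into V f (f v) = v"
  unfolding is_automorphism_def bij_betw_def by (auto simp: inv_into_f_f)

lemma fix_cls:
  assumes f: "is_automorphism V adj f" and r: "is_ray V adj r" and c: "cofinal r (f \<circ> r)"
  shows "(\<lambda>s. f \<circ> s) ` cls V adj r = cls V adj r"
proof
  show "(\<lambda>s. f \<circ> s) ` cls V adj r \<subseteq> cls V adj r"
  proof
    fix x assume "x \<in> (\<lambda>s. f \<circ> s) ` cls V adj r"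
    then obtain s where s: "s \<in> cls V adj r" "x = f \<circ> s" by blast
    have sr: "is_ray V adj s" "cofinal r s" using s(1) unfolding cls_def rays_def by auto
    have "is_ray V adj (f \<circ> s)" using aut_ray[OF f sr(1)] .
    moreover have "cofinal r (f \<circ> s)" using cofinal_trans[OF c cofinal_comp[OF sr(2)]] .
    ultimately show "x \<in> cls V adj r" using s(2) by (simp add: in_cls)
  qed
next
  show "cls V adj r \<subseteq> (\<lambda>s. f \<circ> s) ` cls V adj r"
  proof
    fix s assume s: "s \<in> cls V adj r"
    have sr: "is_ray V adj s" "cofinal r s" using s unfolding cls_def rays_def by auto
    define g where "g = inv_into V f"
    have g: "is_automorphism V adj g" using aut_inv[OF f] unfolding g_def .
    have t: "is_ray V adj (g \<circ> s)" using aut_ray[OF g sr(1)] .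
    have fs: "f \<circ> (g \<circ> s) = s" using aut_inv_right[OF f] ray_V[OF sr(1)] unfolding g_def by auto
    have gr: "g \<circ> (f \<circ> r) = r" using aut_inv_left[OF f] ray_V[OF r] unfolding g_def by auto
    have "cofinal (f \<circ> r) s" using cofinal_trans[OF cofinal_sym[OF c] sr(2)] .
    then have "cofinal (g \<circ> (f \<circ> r)) (g \<circ> s)" by (rule cofinal_comp)
    then have "cofinal r (g \<circ> s)" using gr by simp
    then have "g \<circ> s \<in> cls V adj r" using t by (simp add: in_cls)
    then show "s \<in> (\<lambda>s. f \<circ> s) ` cls V adj r" using fs by (metis image_eqI)
  qed
qed

lemma fixed_cls_cofinal:
  assumes "(\<lambda>s. f \<circ> s) ` cls V adj r = cls V adj r" "is_ray V adj r"
  shows "cofinal r (f \<circ> r)"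
proof -
  have "r \<in> cls V adj r" using assms(2) by (simp add: in_cls cofinal_refl)
  then have "f \<circ> r \<in> cls V adj r" using assms(1) by blast
  then show ?thesis unfolding cls_def by auto
qed

end

definition catw :: "(nat \<Rightarrow> 'v) \<Rightarrow> nat \<Rightarrow> (nat \<Rightarrow> 'v) \<Rightarrow> nat \<Rightarrow> 'v" where
  "catw w n v = (\<lambda>k. if k \<le> n then w k else v (k - n))"

definition nxt :: "('v \<Rightarrow> 'v \<Rightarrow> bool) \<Rightarrow> 'v \<times> 'v \<Rightarrow> 'v \<times> 'v" where
  "nxt adj p = (snd p, SOME z. adj (snd p) z \<and> z \<noteq> fst p)"

definition extray :: "('v \<Rightarrow> 'v \<Rightarrow> bool) \<Rightarrow> 'v \<Rightarrow> 'v \<Rightarrow> nat \<Rightarrow> 'v" where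
  "extray adj y x = (\<lambda>i. fst ((nxt adj ^^ i) (y, x)))"

context tree begin

lemma catw_walk: assumes "walk V adj w n" "walk V adj v m" "w n = v 0"
  shows "walk V adj (catw w n v) (n+m)"
  unfolding walk_def
proof (intro conjI allI impI)
  fix k assume "k \<le> n + m" then show "catw w n v k \<in> V" using assms unfolding walk_def catw_def by auto
next
  fix k assume k: "k < n + m"
  show "adj (catw w n v k) (catw w n v (Suc k))"
  proof (cases "k < n")
    case True then show ?thesis using assms(1) unfolding walk_def catw_def by auto
  next
    case False
    then have "catw w n v k = v (k - n)" using assms(3) unfolding catw_def by auto
    moreover have "catw w n v (Suc k) = v (Suc (k - n))" using False unfolding catw_def by (simp add: Suc_diff_le)
    moreover have "k - n < m" using k False by arith
    ultimately show ?thesis using assms(2) unfolding walk_def by auto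
  qed
qed

lemma catw_nbk: assumes "nbk w n" "nbk v m" "w n = v 0" "0 < n \<and> 0 < m \<longrightarrow> w (n-1) \<noteq> v 1"
  shows "nbk (catw w n v) (n+m)"
  unfolding nbk_def
proof (intro allI impI)
  fix k assume k: "k + 2 \<le> n + m"
  show "catw w n v k \<noteq> catw w n v (k+2)"
  proof (cases "k + 2 \<le> n")
    case True then show ?thesis using assms(1) unfolding nbk_def catw_def by auto
  next
    case F: False
    show ?thesis
    proof (cases "n \<le> k")
      case True
      define j where "j = k - n"
      have kk: "k = n + j" using True unfolding j_def by simp
      have "catw w n v k = v j" using assms(3) kk unfolding catw_def by auto
      moreover have "catw w n v (k+2) = v (j+2)" using kk unfolding catw_def by auto
      moreover have "j + 2 \<le> m" using k kk by simp
      ultimately show ?thesis using assms(2) unfolding nbk_def by auto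
    next
      case False
      then have kk: "k = n - 1" "0 < n" "0 < m" using F k by auto
      have "catw w n v k = w (n-1)" using kk unfolding catw_def by auto
      moreover have "catw w n v (k+2) = v 1" using kk unfolding catw_def by auto
      ultimately show ?thesis using assms(4) kk by auto
    qed
  qed
qed

lemma catw_ray: assumes "walk V adj w n" "nbk w n" "is_ray V adj r" "w n = r 0" "0 < n \<longrightarrow> w (n-1) \<noteq> r 1"
  shows "is_ray V adj (catw w n r)"
  unfolding ray_iff nbray_def
proof (intro conjI allI)
  fix i
  have W: "walk V adj (catw w n r) (n + Suc (Suc i))"
    using catw_walk[OF assms(1) ray_walk[OF assms(3)] assms(4)] .
  have "0 < n \<and> 0 < Suc (Suc i) \<longrightarrow> w (n-1) \<noteq> r 1" using assms(5) by auto
  then have N: "nbk (catw w n r) (n + Suc (Suc i))"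
    by (rule catw_nbk[OF assms(2) ray_nbk[OF assms(3)] assms(4)])
  show "catw w n r i \<in> V" using W unfolding walk_def by auto
  show "adj (catw w n r i) (catw w n r (Suc i))" using W unfolding walk_def by auto
  show "catw w n r i \<noteq> catw w n r (i + 2)" using N unfolding nbk_def by auto
qed

lemma catw_cofinal: "cofinal (catw w n r) r"
  unfolding cofinal_def catw_def by (rule exI[of _ "Suc n"], rule exI[of _ 1]) auto

lemma join_dist: assumes r: "is_ray V adj r" and s: "is_ray V adj s" and "r 0 = s 0" "r 1 \<noteq> s 1"
  shows "tdist V adj (s j) (r i) = j + i"
proof -
  have w: "walk V adj (\<lambda>k. s (j - k)) j" using walk_rev[OF ray_walk[OF s]] .
  have n: "nbk (\<lambda>k. s (j - k)) j" using nbk_rev[OF ray_nbk[OF s]] .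
  have W: "walk V adj (catw (\<lambda>k. s (j - k)) j r) (j + i)"
    using catw_walk[OF w ray_walk[OF r]] assms(3) by simp
  have N: "nbk (catw (\<lambda>k. s (j - k)) j r) (j + i)"
    using catw_nbk[OF n ray_nbk[OF r]] assms(3,4) by auto
  have "tdist V adj (catw (\<lambda>k. s (j - k)) j r 0) (catw (\<lambda>k. s (j - k)) j r (j+i)) = j + i"
    by (rule nb_dist[OF W N])
  moreover have "catw (\<lambda>k. s (j - k)) j r 0 = s j" unfolding catw_def by simp
  moreover have "catw (\<lambda>k. s (j - k)) j r (j+i) = r i" using assms(3) unfolding catw_def by auto
  ultimately show ?thesis by simp
qed

lemma ray_det: assumes r: "is_ray V adj r" and s: "is_ray V adj s" and "r 0 = s 0" "cofinal r s"
  shows "r = s"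
proof -
  obtain k m where km: "\<forall>i. r (i+k) = s (i+m)" using assms(4) unfolding cofinal_def by blast
  have "tdist V adj (r 0) (r k) = k" using ray_dist0[OF r] .
  moreover have "tdist V adj (s 0) (s m) = m" using ray_dist0[OF s] .
  moreover have "r k = s m" using km[rule_format, of 0] by simp
  ultimately have km': "k = m" using assms(3) by simp
  have A: "r i = s i" if "i \<le> k" for i
    by (rule nb_unique'[OF ray_walk[OF r] ray_nbk[OF r] ray_walk[OF s] ray_nbk[OF s] assms(3)])
      (use km[rule_format, of 0] km' that in simp_all)
  show ?thesis
  proof
    fix i show "r i = s i"
    proof (cases "i \<le> k")
      case True then show ?thesis using A by simp
    next
      case False
      then have "i = (i - k) + k" by simp
      then show ?thesis using km[rule_format, of "i-k"] km' by metis
    qed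
  qed
qed

lemma extray_props:
  assumes NL: "\<And>v q. adj v q \<Longrightarrow> \<exists>z. adj v z \<and> z \<noteq> q" and yx: "adj y x"
  shows "is_ray V adj (extray adj y x)" "extray adj y x 0 = y" "extray adj y x 1 = x"
proof -
  define P where "P = (\<lambda>i. (nxt adj ^^ i) (y, x))"
  have PS: "P (Suc i) = nxt adj (P i)" for i unfolding P_def by simp
  have inv: "adj (fst (P i)) (snd (P i))" for i
  proof (induction i)
    case 0 then show ?case using yx unfolding P_def by simp
  next
    case (Suc i)
    have "\<exists>z. adj (snd (P i)) z \<and> z \<noteq> fst (P i)" using NL[OF adj_sym[OF Suc.IH]] .
    then have "adj (snd (P i)) (SOME z. adj (snd (P i)) z \<and> z \<noteq> fst (P i))" by (rule someI2_ex) blast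
    then show ?case unfolding PS nxt_def by simp
  qed
  have ne: "snd (P (Suc i)) \<noteq> fst (P i)" for i
  proof -
    have "\<exists>z. adj (snd (P i)) z \<and> z \<noteq> fst (P i)" using NL[OF adj_sym[OF inv[of i]]] .
    then have "(SOME z. adj (snd (P i)) z \<and> z \<noteq> fst (P i)) \<noteq> fst (P i)" by (rule someI2_ex) blast
    then show ?thesis unfolding PS nxt_def by simp
  qed
  have e: "extray adj y x i = fst (P i)" for i unfolding extray_def P_def by simp
  have fs: "fst (P (Suc i)) = snd (P i)" for i unfolding PS nxt_def by simp
  show "is_ray V adj (extray adj y x)" unfolding ray_iff nbray_def
  proof (intro conjI allI)
    fix i
    show "extray adj y x i \<in> V" using inv[of i] adj_V e by auto
    show "adj (extray adj y x i) (extray adj y x (Suc i))" using inv[of i] e fs by simp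
    have "extray adj y x (i+2) = snd (P (Suc i))" using e fs[of "Suc i"] by simp
    then show "extray adj y x i \<noteq> extray adj y x (i + 2)" using ne[of i] e by simp
  qed
  show "extray adj y x 0 = y" using e[of 0] unfolding P_def by simp
  show "extray adj y x 1 = x" using e[of 1] fs[of 0] unfolding P_def by simp
qed

end

context tree begin

lemma join_walk: assumes r: "is_ray V adj r" and s: "is_ray V adj s" and "r 0 = s 0" "r 1 \<noteq> s 1"
  shows "walk V adj (catw (\<lambda>k. s (j - k)) j r) (j + i)" "nbk (catw (\<lambda>k. s (j - k)) j r) (j + i)"
    "catw (\<lambda>k. s (j - k)) j r 0 = s j" "catw (\<lambda>k. s (j - k)) j r (j+i) = r i"
    "catw (\<lambda>k. s (j - k)) j r j = s 0"
proof -
  have w: "walk V adj (\<lambda>k. s (j - k)) j" using walk_rev[OF ray_walk[OF s]] .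
  have n: "nbk (\<lambda>k. s (j - k)) j" using nbk_rev[OF ray_nbk[OF s]] .
  show "walk V adj (catw (\<lambda>k. s (j - k)) j r) (j + i)"
    using catw_walk[OF w ray_walk[OF r]] assms(3) by simp
  show "nbk (catw (\<lambda>k. s (j - k)) j r) (j + i)"
    using catw_nbk[OF n ray_nbk[OF r]] assms(3,4) by auto
  show "catw (\<lambda>k. s (j - k)) j r 0 = s j" unfolding catw_def by simp
  show "catw (\<lambda>k. s (j - k)) j r (j+i) = r i" using assms(3) unfolding catw_def by auto
  show "catw (\<lambda>k. s (j - k)) j r j = s 0" unfolding catw_def by auto
qed

lemma fix_walk: assumes f: "is_automorphism V adj f" and w: "walk V adj w n" "nbk w n"
  and "f (w 0) = w 0" "f (w n) = w n" "i \<le> n"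
  shows "f (w i) = w i"
proof -
  have "(f \<circ> w) i = w i"
    by (rule nb_unique'[OF aut_walk[OF f w(1)] aut_nbk[OF f w] w]) (use assms in simp_all)
  then show ?thesis by simp
qed

lemma Z0_iff: "v \<in> Z0 V adj (a, b) \<longleftrightarrow> v \<in> V \<and> tdist V adj v b < tdist V adj v a"
  unfolding Z0_def by auto

lemma Z0_step: assumes "adj a b" "v \<in> Z0 V adj (a, b)"
  shows "tdist V adj v a = tdist V adj v b + 1"
  using dist_step[OF adj_sym[OF assms(1)], of v] assms(2) unfolding Z0_iff by auto

lemma geo_second: assumes ab: "adj a b" and c: "c \<in> Z0 V adj (a,b)"
  and w: "walk V adj w n" "nbk w n" "w 0 = a" "w n = c"
  shows "0 < n" "w 1 = b"
proof -
  have cV: "c \<in> V" and aV: "a \<in> V" using c adj_V ab unfolding Z0_iff by auto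
  have dn: "tdist V adj a c = n" using nb_dist[OF w(1,2)] w(3,4) by simp
  have ca: "tdist V adj c a = tdist V adj c b + 1" using Z0_step[OF ab c] .
  have "tdist V adj c a = n" using dn tdist_sym[OF aV cV] by simp
  then show n: "0 < n" using ca by simp
  have w1: "tdist V adj (w 1) (w n) = n - 1" using nb_dist_sub[OF w(1,2), of 1 n] n by simp
  have w1V: "w 1 \<in> V" using w(1) n unfolding walk_def by auto
  have "tdist V adj c (w 1) = n - 1" using w1 w(4) tdist_sym[OF w1V cV] by simp
  moreover have "adj a (w 1)" using w(1) w(3) n unfolding walk_def by auto
  ultimately show "w 1 = b" using parent_unique[OF _ ab cV] ca \<open>tdist V adj c a = n\<close> n by auto
qed

lemma geo_Z0: assumes ab: "adj a b" and c: "c \<in> Z0 V adj (a,b)"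
  and w: "walk V adj w n" "nbk w n" "w 0 = a" "w n = c" and i: "1 \<le> i" "i \<le> n"
  shows "w i \<in> Z0 V adj (a,b)" "tdist V adj a (w i) = i"
proof -
  have b: "w 1 = b" "0 < n" using geo_second[OF ab c w] by auto
  have wiV: "w i \<in> V" using w(1) i unfolding walk_def by auto
  have aV: "a \<in> V" "b \<in> V" using adj_V ab by auto
  have "tdist V adj (w 0) (w i) = i" using nb_dist_sub[OF w(1,2), of 0 i] i by simp
  then show "tdist V adj a (w i) = i" using w(3) by simp
  moreover have "tdist V adj (w 1) (w i) = i - 1" using nb_dist_sub[OF w(1,2), of 1 i] i by simp
  ultimately show "w i \<in> Z0 V adj (a,b)" unfolding Z0_iff using b tdist_sym[OF aV(1) wiV] tdist_sym[OF aV(2) wiV] wiV i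
    by simp
qed

lemma FR: assumes ab: "adj a b" and c: "c \<in> Z0 V adj (a,b)" and r: "is_ray V adj r" "r 0 = c"
  and fw: "tdist V adj a (r 1) = tdist V adj a c + 1"
  shows "cls V adj r \<in> ZB V adj (a,b)"
proof -
  have cV: "c \<in> V" and aV: "a \<in> V" using c adj_V ab unfolding Z0_iff by auto
  define n where "n = tdist V adj a c"
  obtain w where w: "walk V adj w n" "nbk w n" "w 0 = a" "w n = c"
    using geo_ex[OF aV cV] unfolding n_def by blast
  have b: "0 < n" "w 1 = b" using geo_second[OF ab c w] by auto
  have "0 < n \<longrightarrow> w (n-1) \<noteq> r 1"
  proof
    assume "0 < n"
    have "tdist V adj (w 0) (w (n-1)) = n - 1" using nb_dist_sub[OF w(1,2), of 0 "n-1"] by simp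
    then show "w (n-1) \<noteq> r 1" using fw w(3) unfolding n_def by auto
  qed
  then have sr: "is_ray V adj (catw w n r)" using catw_ray[OF w(1,2) r(1)] w(4) r(2) by simp
  have s01: "catw w n r 0 = a" "catw w n r (Suc 0) = b" using w(3) b unfolding catw_def by auto
  have "cls V adj (catw w n r) \<in> ZB V adj (a,b)"
    unfolding ZB_def using cls_in_boundary[OF sr] in_cls[OF sr cofinal_refl] s01 by auto
  then show ?thesis using cls_eq[OF catw_cofinal[of w n r], of V adj] by simp
qed

lemma FRj: assumes ab: "adj a b" and r: "is_ray V adj r" and c: "r j \<in> Z0 V adj (a,b)"
  and fw: "tdist V adj a (r (Suc j)) = tdist V adj a (r j) + 1"
  shows "cls V adj r \<in> ZB V adj (a,b)"
proof -
  have "cls V adj (\<lambda>i. r (i + j)) \<in> ZB V adj (a,b)"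
    by (rule FR[OF ab c ray_shift[OF r]]) (use fw in simp_all)
  then show ?thesis using cls_eq[OF cofinal_shift[of r j], of V adj] by simp
qed

end

context tree begin

lemma fixZB_cofinal: assumes "\<forall>x \<in> ZB V adj (a,b). (\<lambda>s. f \<circ> s) ` x = x" "is_ray V adj r"
  "cls V adj r \<in> ZB V adj (a,b)" shows "cofinal r (f \<circ> r)"
  using fixed_cls_cofinal[OF _ assms(2)] assms(1,3) by blast

lemma back_step:
  assumes NL: "\<And>v q. adj v q \<Longrightarrow> \<exists>z. adj v z \<and> z \<noteq> q" and ab: "adj a b"
    and f: "is_automorphism V adj f" and F: "\<forall>x \<in> ZB V adj (a,b). (\<lambda>s. f \<circ> s) ` x = x"
    and w: "w \<in> Z0 V adj (a,b)" "f w = w" and p: "adj w p" "tdist V adj a p + 1 = tdist V adj a w"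
  shows "f p = p"
proof -
  have aV: "a \<in> V" using adj_V ab by auto
  have wV: "w \<in> V" "p \<in> V" using w p adj_V unfolding Z0_iff by auto
  have fp: "adj w (f p)" using aut_adj[OF f p(1)] w(2) by simp
  have fpV: "f p \<in> V" using aut_V[OF f wV(2)] .
  consider "tdist V adj a (f p) = tdist V adj a w + 1" | "tdist V adj a w = tdist V adj a (f p) + 1"
    using dist_step[OF fp aV] by blast
  then show ?thesis
  proof cases
    case 1
    define r where "r = extray adj w (f p)"
    have r: "is_ray V adj r" "r 0 = w" "r 1 = f p" using extray_props[OF NL fp] unfolding r_def by auto
    have "cls V adj r \<in> ZB V adj (a,b)" by (rule FR[OF ab w(1) r(1,2)]) (use 1 r in simp)
    then have "cofinal r (f \<circ> r)" using fixZB_cofinal[OF F r(1)] by simp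
    then have "r = f \<circ> r" using ray_det[OF r(1) aut_ray[OF f r(1)]] r(2) w(2) by simp
    then have "f (f p) = f p" using r(3) by (metis comp_apply)
    then show ?thesis using aut_inj[OF f fpV wV(2)] by simp
  next
    case 2
    show ?thesis using parent_unique[OF fp p(1) aV] 2 p(2) by simp
  qed
qed

lemma fix_b_imp:
  assumes NL: "\<And>v q. adj v q \<Longrightarrow> \<exists>z. adj v z \<and> z \<noteq> q" and ab: "adj a b"
    and f: "is_automorphism V adj f" and F: "\<forall>x \<in> ZB V adj (a,b). (\<lambda>s. f \<circ> s) ` x = x"
    and fb: "f b = b" and v: "v \<in> Z0 V adj (a,b)"
  shows "f v = v"
proof -
  have aV: "a \<in> V" and vV: "v \<in> V" using v adj_V ab unfolding Z0_iff by auto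
  define n where "n = tdist V adj a v"
  obtain w where w: "walk V adj w n" "nbk w n" "w 0 = a" "w n = v"
    using geo_ex[OF aV vV] unfolding n_def by blast
  have b: "0 < n" "w 1 = b" using geo_second[OF ab v w] by auto
  have "adj (w (n-1)) (w n)" using w(1) b unfolding walk_def by (metis Suc_pred' diff_less zero_less_one)
  then have "adj v (w (n-1))" using w(4) adj_sym by simp
  then obtain z where z: "adj v z" "z \<noteq> w (n-1)" using NL by blast
  define e where "e = extray adj v z"
  have e: "is_ray V adj e" "e 0 = v" "e 1 = z" using extray_props[OF NL z(1)] unfolding e_def by auto
  define s where "s = catw w n e"
  have s: "is_ray V adj s" unfolding s_def by (rule catw_ray[OF w(1,2) e(1)]) (use w(4) e z in simp_all)
  have s01: "s 0 = a" "s (Suc 0) = b" using w(3) b unfolding s_def catw_def by auto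
  have "cls V adj s \<in> ZB V adj (a,b)"
    unfolding ZB_def using cls_in_boundary[OF s] in_cls[OF s cofinal_refl] s01 by auto
  then have c: "cofinal s (f \<circ> s)" using fixZB_cofinal[OF F s] by simp
  define s' where "s' = (\<lambda>i. s (i + 1))"
  have s': "is_ray V adj s'" unfolding s'_def by (rule ray_shift[OF s])
  have "cofinal s' (f \<circ> s')"
  proof -
    have "cofinal s' s" unfolding s'_def by (rule cofinal_sym[OF cofinal_shift])
    moreover have "cofinal (f \<circ> s) (f \<circ> s')" unfolding s'_def using cofinal_comp[OF cofinal_shift[of s 1]]
      by (simp add: comp_def)
    ultimately show ?thesis using c by (blast intro: cofinal_trans)
  qed
  then have "s' = f \<circ> s'" using ray_det[OF s' aut_ray[OF f s']] s01 fb unfolding s'_def by simp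
  then have "f (s' (n-1)) = s' (n-1)" by (metis comp_apply)
  moreover have "s' (n-1) = v" using b w(4) unfolding s'_def s_def catw_def by simp
  ultimately show ?thesis by simp
qed

lemma fix_c_imp_b:
  assumes NL: "\<And>v q. adj v q \<Longrightarrow> \<exists>z. adj v z \<and> z \<noteq> q" and ab: "adj a b"
    and f: "is_automorphism V adj f" and F: "\<forall>x \<in> ZB V adj (a,b). (\<lambda>s. f \<circ> s) ` x = x"
    and c: "c \<in> Z0 V adj (a,b)" "f c = c"
  shows "f b = b"
proof -
  have aV: "a \<in> V" and cV: "c \<in> V" using c adj_V ab unfolding Z0_iff by auto
  define n where "n = tdist V adj a c"
  obtain w where w: "walk V adj w n" "nbk w n" "w 0 = a" "w n = c"
    using geo_ex[OF aV cV] unfolding n_def by blast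
  have b: "0 < n" "w 1 = b" using geo_second[OF ab c(1) w] by auto
  have "f (w (n - k)) = w (n - k)" if "k < n" for k
    using that
  proof (induction k)
    case 0 then show ?case using w(4) c(2) by simp
  next
    case (Suc k)
    have k: "k < n" "1 \<le> n - k" "n - k \<le> n" using Suc.prems by auto
    have IH: "f (w (n - k)) = w (n - k)" using Suc.IH k by simp
    have Z: "w (n-k) \<in> Z0 V adj (a,b)" "tdist V adj a (w (n-k)) = n - k" using geo_Z0[OF ab c(1) w k(2,3)] by auto
    have eq: "Suc (n - Suc k) = n - k" using Suc.prems by arith
    have "adj (w (n - Suc k)) (w (Suc (n - Suc k)))" using w(1) Suc.prems unfolding walk_def by auto
    then have ad: "adj (w (n-k)) (w (n - Suc k))" using eq adj_sym by simp
    have "tdist V adj (w 0) (w (n - Suc k)) = n - Suc k" using nb_dist_sub[OF w(1,2), of 0 "n - Suc k"] by simp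
    then have d: "tdist V adj a (w (n - Suc k)) + 1 = tdist V adj a (w (n-k))" using Z(2) w(3) Suc.prems by simp
    show ?case by (rule back_step[OF NL ab f F Z(1) IH ad d])
  qed
  from this[of "n-1"] show ?thesis using b by simp
qed

end

definition three :: "('v \<Rightarrow> 'v \<Rightarrow> bool) \<Rightarrow> 'v \<Rightarrow> bool" where
  "three adj c \<longleftrightarrow> (\<exists>x y z. adj c x \<and> adj c y \<and> adj c z \<and> x \<noteq> y \<and> x \<noteq> z \<and> y \<noteq> z)"

context tree begin

lemma two_fwd: assumes "v \<in> V" "three adj c"
  shows "\<exists>x y. x \<noteq> y \<and> adj c x \<and> adj c y \<and> tdist V adj v x = tdist V adj v c + 1 \<and> tdist V adj v y = tdist V adj v c + 1"
proof -
  obtain x y z where xyz: "adj c x" "adj c y" "adj c z" "x \<noteq> y" "x \<noteq> z" "y \<noteq> z"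
    using assms(2) unfolding three_def by blast
  have st: "tdist V adj v n = tdist V adj v c + 1 \<or> tdist V adj v c = tdist V adj v n + 1" if "adj c n" for n
    using dist_step[OF that assms(1)] by simp
  have pu: "n = n'" if "adj c n" "adj c n'" "tdist V adj v c = tdist V adj v n + 1" "tdist V adj v c = tdist V adj v n' + 1" for n n'
    using parent_unique[OF that(1,2) assms(1)] that(3,4) by simp
  show ?thesis using st[OF xyz(1)] st[OF xyz(2)] st[OF xyz(3)] pu[OF xyz(1) xyz(2)] pu[OF xyz(1) xyz(3)] pu[OF xyz(2) xyz(3)]
      xyz by metis
qed

lemma two_other: assumes "three adj c" shows "\<exists>z z'. z \<noteq> z' \<and> adj c z \<and> adj c z' \<and> z \<noteq> p \<and> z' \<noteq> p"
  using assms unfolding three_def by metis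

lemma tripod:
  assumes NL: "\<And>v q. adj v q \<Longrightarrow> \<exists>z. adj v z \<and> z \<noteq> q"
    and DEG: "\<And>p q. adj p q \<Longrightarrow> \<exists>c \<in> Z0 V adj (p,q). three adj c"
    and ab: "adj a b"
    and f: "is_automorphism V adj f" and F: "\<forall>x \<in> ZB V adj (a,b). (\<lambda>s. f \<circ> s) ` x = x"
  shows "\<exists>c \<in> Z0 V adj (a,b). f c = c"
proof -
  have aV: "a \<in> V" using adj_V ab by auto
  obtain c where c: "c \<in> Z0 V adj (a,b)" "three adj c" using DEG[OF ab] by blast
  have cV: "c \<in> V" using c unfolding Z0_iff by auto
  obtain x y where xy: "x \<noteq> y" "adj c x" "adj c y" "tdist V adj a x = tdist V adj a c + 1"
    "tdist V adj a y = tdist V adj a c + 1" using two_fwd[OF aV c(2)] by blast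
  obtain c2 where c2: "c2 \<in> Z0 V adj (c,x)" "three adj c2" using DEG[OF xy(2)] by blast
  have c2V: "c2 \<in> V" using c2 unfolding Z0_iff by auto
  define p where "p = tdist V adj c c2"
  obtain w where w: "walk V adj w p" "nbk w p" "w 0 = c" "w p = c2"
    using geo_ex[OF cV c2V] unfolding p_def by blast
  have wp: "0 < p" "w 1 = x" using geo_second[OF xy(2) c2(1) w] by auto
  obtain z z' where zz: "z \<noteq> z'" "adj c2 z" "adj c2 z'" "z \<noteq> w (p-1)" "z' \<noteq> w (p-1)"
    using two_other[OF c2(2)] by blast
  define E where "E = extray adj c2 z"
  define E' where "E' = extray adj c2 z'"
  define S where "S = extray adj c y"
  have E: "is_ray V adj E" "E 0 = c2" "E 1 = z" using extray_props[OF NL zz(2)] unfolding E_def by auto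
  have E': "is_ray V adj E'" "E' 0 = c2" "E' 1 = z'" using extray_props[OF NL zz(3)] unfolding E'_def by auto
  have S: "is_ray V adj S" "S 0 = c" "S 1 = y" using extray_props[OF NL xy(3)] unfolding S_def by auto
  define \<rho> where "\<rho> = catw w p E"
  define \<mu> where "\<mu> = catw w p E'"
  have \<rho>: "is_ray V adj \<rho>" unfolding \<rho>_def by (rule catw_ray[OF w(1,2) E(1)]) (use w E zz in simp_all)
  have \<mu>: "is_ray V adj \<mu>" unfolding \<mu>_def by (rule catw_ray[OF w(1,2) E'(1)]) (use w E' zz in simp_all)
  have \<rho>01: "\<rho> 0 = c" "\<rho> 1 = x" using w(3) wp unfolding \<rho>_def catw_def by auto
  have \<mu>01: "\<mu> 0 = c" "\<mu> 1 = x" using w(3) wp unfolding \<mu>_def catw_def by auto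
  have \<rho>E: "\<rho> (i + p) = E i" for i using w(4) E(2) unfolding \<rho>_def catw_def by auto
  have \<mu>E: "\<mu> (i + p) = E' i" for i using w(4) E'(2) unfolding \<mu>_def catw_def by auto
  have Z\<rho>: "cls V adj \<rho> \<in> ZB V adj (a,b)" by (rule FR[OF ab c(1) \<rho>]) (use \<rho>01 xy in simp_all)
  have Z\<mu>: "cls V adj \<mu> \<in> ZB V adj (a,b)" by (rule FR[OF ab c(1) \<mu>]) (use \<mu>01 xy in simp_all)
  have ZS: "cls V adj S \<in> ZB V adj (a,b)" by (rule FR[OF ab c(1) S(1,2)]) (use S xy in simp_all)
  obtain k1 m1 where d1: "\<forall>i. \<rho> (i + k1) = f (\<rho> (i + m1))"
    using fixZB_cofinal[OF F \<rho> Z\<rho>] unfolding cofinal_def by auto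
  obtain k2 m2 where d2: "\<forall>i. \<mu> (i + k2) = f (\<mu> (i + m2))"
    using fixZB_cofinal[OF F \<mu> Z\<mu>] unfolding cofinal_def by auto
  obtain k3 m3 where d3: "\<forall>i. S (i + k3) = f (S (i + m3))"
    using fixZB_cofinal[OF F S(1) ZS] unfolding cofinal_def by auto
  have J1: "tdist V adj (S j) (\<rho> i) = j + i" for i j by (rule join_dist[OF \<rho> S(1)]) (use \<rho>01 S xy in simp_all)
  have J2: "tdist V adj (S j) (\<mu> i) = j + i" for i j by (rule join_dist[OF \<mu> S(1)]) (use \<mu>01 S xy in simp_all)
  have J3: "tdist V adj (E' j) (E i) = j + i" for i j by (rule join_dist[OF E(1) E'(1)]) (use E E' zz in simp_all)
  have eq1: "k3 + k1 = m3 + m1"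
  proof -
    have "k3 + k1 = tdist V adj (S k3) (\<rho> k1)" using J1 by simp
    also have "\<dots> = tdist V adj (f (S m3)) (f (\<rho> m1))" using d3[rule_format, of 0] d1[rule_format, of 0] by simp
    also have "\<dots> = tdist V adj (S m3) (\<rho> m1)" using aut_dist[OF f ray_V[OF S(1)] ray_V[OF \<rho>]] by simp
    also have "\<dots> = m3 + m1" using J1 by simp
    finally show ?thesis .
  qed
  have eq2: "k3 + k2 = m3 + m2"
  proof -
    have "k3 + k2 = tdist V adj (S k3) (\<mu> k2)" using J2 by simp
    also have "\<dots> = tdist V adj (f (S m3)) (f (\<mu> m2))" using d3[rule_format, of 0] d2[rule_format, of 0] by simp
    also have "\<dots> = tdist V adj (S m3) (\<mu> m2)" using aut_dist[OF f ray_V[OF S(1)] ray_V[OF \<mu>]] by simp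
    also have "\<dots> = m3 + m2" using J2 by simp
    finally show ?thesis .
  qed
  have eq3: "k2 + k1 = m2 + m1"
  proof -
    have "k2 + k1 = tdist V adj (E' k2) (E k1)" using J3 by simp
    also have "\<dots> = tdist V adj (\<mu> (p + k2)) (\<rho> (p + k1))" using \<rho>E \<mu>E by (simp add: add.commute)
    also have "\<dots> = tdist V adj (f (\<mu> (p + m2))) (f (\<rho> (p + m1)))"
      using d2[rule_format, of p] d1[rule_format, of p] by simp
    also have "\<dots> = tdist V adj (\<mu> (p + m2)) (\<rho> (p + m1))" using aut_dist[OF f ray_V[OF \<mu>] ray_V[OF \<rho>]] by simp
    also have "\<dots> = tdist V adj (E' m2) (E m1)" using \<rho>E \<mu>E by (simp add: add.commute)
    also have "\<dots> = m2 + m1" using J3 by simp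
    finally show ?thesis .
  qed
  have km: "k1 = m1" "k3 = m3" using eq1 eq2 eq3 by arith+
  have fx1: "f (\<rho> k1) = \<rho> k1" using d1[rule_format, of 0] km by simp
  have fx3: "f (S k3) = S k3" using d3[rule_format, of 0] km by simp
  have rS: "\<rho> 0 = S 0" "\<rho> 1 \<noteq> S 1" using \<rho>01 S xy by auto
  note JW1 = join_walk(1)[OF \<rho> S(1) rS, of k3 k1]
  note JW2 = join_walk(2)[OF \<rho> S(1) rS, of k3 k1]
  note JW3 = join_walk(3)[OF \<rho> S(1) rS, of k3]
  note JW4 = join_walk(4)[OF \<rho> S(1) rS, of k3 k1]
  note JW5 = join_walk(5)[OF \<rho> S(1) rS, of k3]
  have "f (catw (\<lambda>k. S (k3 - k)) k3 \<rho> k3) = catw (\<lambda>k. S (k3 - k)) k3 \<rho> k3"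
    by (rule fix_walk[OF f JW1 JW2]) (use JW3 JW4 fx1 fx3 in simp_all)
  then have "f c = c" using JW5 S by simp
  then show ?thesis using c(1) by blast
qed

end

context tree begin

lemma three_V: "three adj c \<Longrightarrow> c \<in> V" unfolding three_def using adj_V by blast

lemma det_walk: assumes N3: "\<And>c. \<not> three adj c"
  and w: "walk V adj w n" "nbk w n" and w': "walk V adj w' n" "nbk w' n"
  and "w 0 = w' 0" "w 1 = w' 1" "i \<le> n"
  shows "w i = w' i"
  using assms(8)
proof (induction i rule: less_induct)
  case (less i)
  show ?case
  proof (cases "i < 2")
    case True then show ?thesis using assms(6,7) by (cases i) (auto simp: less_Suc_eq)
  next
    case False
    then obtain j where j: "i = j + 2" by (metis add.commute le_Suc_ex not_less numeral_2_eq_2 Suc_1)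
    have e0: "w j = w' j" "w (Suc j) = w' (Suc j)" using less.IH less.prems j by auto
    have a1: "adj (w (Suc j)) (w j)" using w(1) less.prems j adj_sym unfolding walk_def by auto
    have a2: "adj (w (Suc j)) (w (j+2))" using w(1) less.prems j unfolding walk_def by auto
    have a3: "adj (w' (Suc j)) (w' (j+2))" using w'(1) less.prems j unfolding walk_def by auto
    have n1: "w j \<noteq> w (j+2)" using w(2) less.prems j unfolding nbk_def by auto
    have n2: "w' j \<noteq> w' (j+2)" using w'(2) less.prems j unfolding nbk_def by auto
    show ?thesis
    proof (rule ccontr)
      assume "w i \<noteq> w' i"
      then have "three adj (w (Suc j))" unfolding three_def using a1 a2 a3 n1 n2 e0 j by metis
      then show False using N3 by blast
    qed
  qed
qed

lemma det_ray: assumes N3: "\<And>c. \<not> three adj c" and r: "is_ray V adj r" and s: "is_ray V adj s"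
  and "r 0 = s 0" "r 1 = s 1" shows "r = s"
proof
  fix i show "r i = s i"
    by (rule det_walk[OF N3 ray_walk[OF r] ray_nbk[OF r] ray_walk[OF s] ray_nbk[OF s]]) (use assms in auto)
qed

lemma nbrs2: assumes N3: "\<And>c. \<not> three adj c" and "adj c x" "adj c y" "x \<noteq> y" "adj c z"
  shows "z = x \<or> z = y"
  using N3[of c] assms unfolding three_def by metis

lemma ray_nbrs: assumes N3: "\<And>c. \<not> three adj c" and r: "is_ray V adj r" and "0 < n" "adj (r n) z"
  shows "z = r (n-1) \<or> z = r (Suc n)"
proof -
  have "adj (r n) (r (n-1))" using ray_adj[OF r, of "n-1"] assms(3) adj_sym by simp
  moreover have "adj (r n) (r (Suc n))" using ray_adj[OF r] .
  moreover have "r (n-1) \<noteq> r (Suc n)" using ray_nb[OF r, of "n-1"] assms(3) by simp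
  ultimately show ?thesis using nbrs2[OF N3 _ _ _ assms(4)] by blast
qed

lemma half_class: assumes N3: "\<And>c. \<not> three adj c" and r: "is_ray V adj r" and s: "is_ray V adj s"
  and rs: "r 0 = s 0" "r 1 \<noteq> s 1" and \<nu>: "is_ray V adj \<nu>" "\<nu> 0 = r n"
  shows "cofinal \<nu> r \<or> cofinal \<nu> s"
proof (cases "n = 0")
  case True
  have "adj (r 0) (\<nu> 1)" using ray_adj[OF \<nu>(1), of 0] \<nu>(2) True by simp
  moreover have "adj (r 0) (r 1)" "adj (r 0) (s 1)" using ray_adj[OF r, of 0] ray_adj[OF s, of 0] rs by auto
  ultimately have "\<nu> 1 = r 1 \<or> \<nu> 1 = s 1" using nbrs2[OF N3] rs(2) by blast
  then show ?thesis
  proof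
    assume "\<nu> 1 = r 1" then have "\<nu> = r" using det_ray[OF N3 \<nu>(1) r] \<nu>(2) True by simp
    then show ?thesis by (simp add: cofinal_refl)
  next
    assume "\<nu> 1 = s 1" then have "\<nu> = s" using det_ray[OF N3 \<nu>(1) s] \<nu>(2) True rs by simp
    then show ?thesis by (simp add: cofinal_refl)
  qed
next
  case False
  have "adj (r n) (\<nu> 1)" using ray_adj[OF \<nu>(1), of 0] \<nu>(2) by simp
  then have "\<nu> 1 = r (n-1) \<or> \<nu> 1 = r (Suc n)" using ray_nbrs[OF N3 r] False by simp
  then show ?thesis
  proof
    assume "\<nu> 1 = r (Suc n)"
    then have "\<nu> = (\<lambda>i. r (i + n))" using det_ray[OF N3 \<nu>(1) ray_shift[OF r]] \<nu>(2) by simp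
    then show ?thesis using cofinal_sym[OF cofinal_shift[of r n]] by simp
  next
    assume a: "\<nu> 1 = r (n-1)"
    define \<tau> where "\<tau> = catw (\<lambda>k. r (n - k)) n s"
    have t: "is_ray V adj \<tau>" unfolding \<tau>_def
      by (rule catw_ray[OF walk_rev[OF ray_walk[OF r]] nbk_rev[OF ray_nbk[OF r]] s]) (use rs False in auto)
    have "\<tau> 0 = r n" "\<tau> 1 = r (n-1)" unfolding \<tau>_def catw_def using False by auto
    then have "\<nu> = \<tau>" using det_ray[OF N3 \<nu>(1) t] \<nu>(2) a by simp
    then show ?thesis using catw_cofinal[of _ n s] unfolding \<tau>_def by blast
  qed
qed

lemma on_two_rays: assumes N3: "\<And>c. \<not> three adj c" and r: "is_ray V adj r" and s: "is_ray V adj s"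
  and rs: "r 0 = s 0" "r 1 \<noteq> s 1" and u: "u \<in> V"
  shows "\<exists>n. u = r n \<or> u = s n"
proof -
  have vV: "r 0 \<in> V" using ray_V[OF r] .
  define n where "n = tdist V adj (r 0) u"
  obtain w where w: "walk V adj w n" "nbk w n" "w 0 = r 0" "w n = u"
    using geo_ex[OF vV u] unfolding n_def by blast
  show ?thesis
  proof (cases "n = 0")
    case True then have "u = r 0" using w(3,4) by simp
    then show ?thesis by blast
  next
    case False
    have "adj (r 0) (w 1)" using w(1,3) False unfolding walk_def by auto
    moreover have "adj (r 0) (r 1)" "adj (r 0) (s 1)" using ray_adj[OF r, of 0] ray_adj[OF s, of 0] rs by auto
    ultimately have "w 1 = r 1 \<or> w 1 = s 1" using nbrs2[OF N3] rs(2) by blast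
    then show ?thesis
    proof
      assume "w 1 = r 1"
      then have "w n = r n" using det_walk[OF N3 w(1,2) ray_walk[OF r] ray_nbk[OF r]] w(3) by simp
      then show ?thesis using w(4) by auto
    next
      assume "w 1 = s 1"
      then have "w n = s n" using det_walk[OF N3 w(1,2) ray_walk[OF s] ray_nbk[OF s]] w(3) rs by simp
      then show ?thesis using w(4) by auto
    qed
  qed
qed

lemma classify: assumes N3: "\<And>c. \<not> three adj c" and r: "is_ray V adj r" and s: "is_ray V adj s"
  and rs: "r 0 = s 0" "r 1 \<noteq> s 1" and \<nu>: "is_ray V adj \<nu>"
  shows "cofinal \<nu> r \<or> cofinal \<nu> s"
proof -
  obtain n where "\<nu> 0 = r n \<or> \<nu> 0 = s n" using on_two_rays[OF N3 r s rs ray_V[OF \<nu>]] by blast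
  then show ?thesis
  proof
    assume "\<nu> 0 = r n" then show ?thesis using half_class[OF N3 r s rs \<nu>] by blast
  next
    assume "\<nu> 0 = s n" then show ?thesis using half_class[OF N3 s r _ _ \<nu>] rs by metis
  qed
qed

lemma not_cofinal_join: assumes r: "is_ray V adj r" and s: "is_ray V adj s"
  and rs: "r 0 = s 0" "r 1 \<noteq> s 1" shows "\<not> cofinal r s"
proof
  assume "cofinal r s"
  then obtain k m where "\<forall>i. r (i+k) = s (i+m)" unfolding cofinal_def by blast
  then have "r (1+k) = s (1+m)" by blast
  moreover have "tdist V adj (s (1+m)) (r (1+k)) = (1+m) + (1+k)" using join_dist[OF r s rs] .
  ultimately show False using tdist_refl ray_V[OF r] by (metis add_is_0 one_neq_zero)
qed

end

context tree begin

lemma hyp_aut: "hyperbolic V adj h \<Longrightarrow> is_automorphism V adj h" unfolding hyperbolic_def by auto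
lemma hyp_nofix: "hyperbolic V adj h \<Longrightarrow> v \<in> V \<Longrightarrow> h v \<noteq> v" unfolding hyperbolic_def by auto
lemma hyp_noinv: "hyperbolic V adj h \<Longrightarrow> adj u v \<Longrightarrow> h u = v \<Longrightarrow> h v \<noteq> u"
  unfolding hyperbolic_def using adj_V by blast

lemma swap_false:
  assumes h: "hyperbolic V adj h" and r: "is_ray V adj r" and s: "is_ray V adj s"
    and rs: "r 0 = s 0" "r 1 \<noteq> s 1"
    and c1: "cofinal (h \<circ> r) s" and c2: "cofinal (h \<circ> s) r"
  shows False
proof -
  have f: "is_automorphism V adj h" using hyp_aut[OF h] .
  obtain k m where km: "\<forall>i. h (r (i+k)) = s (i+m)" using c1 unfolding cofinal_def by auto
  obtain k' m' where km': "\<forall>i. h (s (i+k')) = r (i+m')" using c2 unfolding cofinal_def by auto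
  define K where "K = k + k'"
  define A where "A = k + m'"
  define B where "B = k' + m"
  have hrK: "h (r K) = s B" using km[rule_format, of k'] unfolding K_def B_def by (simp add: ac_simps)
  have hsK: "h (s K) = r A" using km'[rule_format, of k] unfolding K_def A_def by (simp add: ac_simps)
  have sr: "s 0 = r 0" "s 1 \<noteq> r 1" using rs by auto
  have AB: "A + B = K + K"
  proof -
    have "K + K = tdist V adj (s K) (r K)" using join_dist[OF r s rs] by simp
    also have "\<dots> = tdist V adj (h (s K)) (h (r K))" using aut_dist[OF f ray_V[OF s] ray_V[OF r]] by simp
    also have "\<dots> = tdist V adj (r A) (s B)" using hrK hsK by simp
    also have "\<dots> = A + B" using join_dist[OF s r sr] by simp
    finally show ?thesis by simp
  qed
  define W where "W = catw (\<lambda>j. s (K - j)) K r"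
  define W' where "W' = catw (\<lambda>j. r (A - j)) A s"
  have Ww: "walk V adj W (K + K)" "nbk W (K + K)" "W 0 = s K" "W (K+K) = r K"
    using join_walk(1)[OF r s rs, of K K] join_walk(2)[OF r s rs, of K K]
      join_walk(3)[OF r s rs, of K] join_walk(4)[OF r s rs, of K K] unfolding W_def by auto
  have W'w0: "walk V adj W' (A + B)" "nbk W' (A + B)" "W' 0 = r A" "W' (A+B) = s B"
    using join_walk(1)[OF s r sr, of A B] join_walk(2)[OF s r sr, of A B]
      join_walk(3)[OF s r sr, of A] join_walk(4)[OF s r sr, of A B] unfolding W'_def by auto
  have W'w: "walk V adj W' (K + K)" "nbk W' (K + K)" "W' 0 = r A" "W' (K+K) = s B"
    using W'w0 AB by simp_all
  have hW: "h (W j) = W' j" if "j \<le> K + K" for j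
  proof -
    have e0: "(h \<circ> W) 0 = W' 0" using Ww(3) hsK W'w(3) by simp
    have e1: "(h \<circ> W) (K+K) = W' (K+K)" using Ww(4) hrK W'w(4) by simp
    have "(h \<circ> W) j = W' j"
      by (rule nb_unique'[OF aut_walk[OF f Ww(1)] aut_nbk[OF f Ww(1,2)] W'w(1,2) e0 e1 that])
    then show ?thesis by simp
  qed
  have rel: "W' j = W (K + A - j)" if "j \<le> K + A" for j
  proof (cases "j \<le> A")
    case True then show ?thesis unfolding W_def W'_def catw_def using rs by auto
  next
    case False then show ?thesis unfolding W_def W'_def catw_def using that by auto
  qed
  have A2: "A \<le> K + K" using AB by simp
  define t where "t = (K + A) div 2"
  show False
  proof (cases "even (K + A)")
    case True
    have "2 * t = K + A" unfolding t_def using even_two_times_div_two[OF True] .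
    then have tt: "K + A - t = t" "t \<le> K + K" "t \<le> K + A" using A2 by arith+
    have "h (W t) = W t" using hW[OF tt(2)] rel[OF tt(3)] tt(1) by simp
    moreover have "W t \<in> V" using Ww(1) tt(2) unfolding walk_def by auto
    ultimately show False using hyp_nofix[OF h] by blast
  next
    case False
    have "2 * t + 1 = K + A" unfolding t_def using odd_two_times_div_two_succ[OF False] .
    then have tt: "K + A - t = Suc t" "K + A - Suc t = t" "Suc t \<le> K + K" "Suc t \<le> K + A" "t < K + K"
      using A2 by arith+
    have e1: "h (W t) = W (Suc t)" using hW[of t] rel[of t] tt by simp
    have e2: "h (W (Suc t)) = W t" using hW[of "Suc t"] rel[of "Suc t"] tt by simp
    have "adj (W t) (W (Suc t))" using Ww(1) tt(5) unfolding walk_def by auto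
    then show False using hyp_noinv[OF h _ e1] e2 by simp
  qed
qed

lemma line_fix:
  assumes N3: "\<And>c. \<not> three adj c" and h: "hyperbolic V adj h"
    and r: "is_ray V adj r" and s: "is_ray V adj s" and rs: "r 0 = s 0" "r 1 \<noteq> s 1"
  shows "cofinal r (h \<circ> r)"
proof -
  have f: "is_automorphism V adj h" using hyp_aut[OF h] .
  have hr: "is_ray V adj (h \<circ> r)" "is_ray V adj (h \<circ> s)" using aut_ray[OF f] r s by auto
  consider "cofinal (h \<circ> r) r" | "cofinal (h \<circ> r) s" using classify[OF N3 r s rs hr(1)] by blast
  then show ?thesis
  proof cases
    case 1 then show ?thesis by (rule cofinal_sym)
  next
    case 2
    consider "cofinal (h \<circ> s) r" | "cofinal (h \<circ> s) s" using classify[OF N3 r s rs hr(2)] by blast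
    then show ?thesis
    proof cases
      case 1 then show ?thesis using swap_false[OF h r s rs 2] by blast
    next
      case 3: 2
      have "cofinal (h \<circ> r) (h \<circ> s)" using cofinal_trans[OF 2 cofinal_sym[OF 3]] .
      then have "cofinal (inv_into V h \<circ> (h \<circ> r)) (inv_into V h \<circ> (h \<circ> s))" by (rule cofinal_comp)
      moreover have "inv_into V h \<circ> (h \<circ> r) = r" "inv_into V h \<circ> (h \<circ> s) = s"
        using aut_inv_left[OF f] ray_V[OF r] ray_V[OF s] by auto
      ultimately have "cofinal r s" by simp
      then show ?thesis using not_cofinal_join[OF r s rs] by blast
    qed
  qed
qed

lemma line_false:
  assumes N3: "\<And>c. \<not> three adj c" and NL2: "\<forall>v\<in>V. \<exists>x y. adj v x \<and> adj v y \<and> x \<noteq> y"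
    and h1: "hyperbolic V adj h1" and h2: "hyperbolic V adj h2"
    and disj: "fixed_points V adj h1 \<inter> fixed_points V adj h2 = {}"
  shows False
proof -
  have NL: "\<exists>z. adj v z \<and> z \<noteq> q" if "adj v q" for v q
    using NL2 that adj_V by metis
  obtain v where v: "v \<in> V" using V_ne by blast
  obtain x y where xy: "adj v x" "adj v y" "x \<noteq> y" using NL2 v by blast
  define r where "r = extray adj v x"
  define s where "s = extray adj v y"
  have r: "is_ray V adj r" "r 0 = v" "r 1 = x" using extray_props[OF NL xy(1)] unfolding r_def by auto
  have s: "is_ray V adj s" "s 0 = v" "s 1 = y" using extray_props[OF NL xy(2)] unfolding s_def by auto
  have rs: "r 0 = s 0" "r 1 \<noteq> s 1" using r s xy by auto
  have inF: "Inr (cls V adj r) \<in> fixed_points V adj h" if "hyperbolic V adj h" for h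
  proof -
    have "(\<lambda>\<rho>. h \<circ> \<rho>) ` cls V adj r = cls V adj r"
      using fix_cls[OF hyp_aut[OF that] r(1) line_fix[OF N3 that r(1) s(1) rs]] .
    then show ?thesis unfolding fixed_points_def points_def act_pt_def using cls_in_boundary[OF r(1)] by auto
  qed
  show False using inF[OF h1] inF[OF h2] disj by blast
qed

end

definition convex :: "'v set \<Rightarrow> ('v \<Rightarrow> 'v \<Rightarrow> bool) \<Rightarrow> 'v set \<Rightarrow> bool" where
  "convex V adj W \<longleftrightarrow> (\<forall>w n. walk V adj w n \<longrightarrow> nbk w n \<longrightarrow> w 0 \<in> W \<longrightarrow> w n \<in> W \<longrightarrow> (\<forall>i\<le>n. w i \<in> W))"

context tree begin

lemma conv_subtree: assumes "W \<subseteq> V" "W \<noteq> {}" "convex V adj W" shows "subtree V adj W"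
  unfolding subtree_def
proof (intro conjI ballI)
  show "W \<noteq> {}" "W \<subseteq> V" using assms by auto
next
  fix u v assume uv: "u \<in> W" "v \<in> W"
  then have uvV: "u \<in> V" "v \<in> V" using assms by auto
  obtain w where w: "walk V adj w (tdist V adj u v)" "nbk w (tdist V adj u v)" "w 0 = u" "w (tdist V adj u v) = v"
    using geo_ex[OF uvV] by blast
  have "w 0 \<in> W" "w (tdist V adj u v) \<in> W" using w uv by simp_all
  then have inW: "\<forall>i\<le>tdist V adj u v. w i \<in> W" using assms(3) w(1,2) unfolding convex_def by blast
  have "walk W adj w (tdist V adj u v)" using w(1) inW unfolding walk_def by auto
  then have "is_path W adj (map w [0..<Suc (tdist V adj u v)])" using is_path_map by metis
  moreover have "hd (map w [0..<Suc (tdist V adj u v)]) = u" using w(3) by (simp add: hd_map hd_upt)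
  moreover have "last (map w [0..<Suc (tdist V adj u v)]) = v" using w(4) by (simp add: upt_Suc)
  ultimately show "\<exists>p. is_path W adj p \<and> hd p = u \<and> last p = v" by blast
qed

lemma junction: assumes pq: "adj p q" and uV: "u \<in> V" and xV: "x \<in> V"
  and du: "tdist V adj u q = tdist V adj u p + 1" and dx: "tdist V adj x p = tdist V adj x q + 1"
  shows "tdist V adj u x = tdist V adj u p + 1 + tdist V adj q x"
proof -
  have pV: "p \<in> V" "q \<in> V" using adj_V pq by auto
  define n1 where "n1 = tdist V adj u p"
  define n2 where "n2 = tdist V adj q x"
  obtain w1 where w1: "walk V adj w1 n1" "nbk w1 n1" "w1 0 = u" "w1 n1 = p"
    using geo_ex[OF uV pV(1)] unfolding n1_def by blast
  obtain w2 where w2: "walk V adj w2 n2" "nbk w2 n2" "w2 0 = q" "w2 n2 = x"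
    using geo_ex[OF pV(2) xV] unfolding n2_def by blast
  have j1: "0 < n1 \<longrightarrow> w1 (n1-1) \<noteq> q"
  proof
    assume "0 < n1"
    have "tdist V adj (w1 0) (w1 (n1-1)) = n1 - 1" using nb_dist_sub[OF w1(1,2), of 0 "n1-1"] by simp
    then show "w1 (n1-1) \<noteq> q" using du w1(3) unfolding n1_def by auto
  qed
  define e where "e = ext w1 n1 q"
  have e: "walk V adj e (Suc n1)" "nbk e (Suc n1)" using ext_walk[OF w1(1)] ext_nbk[OF w1(2) j1] w1(4) pq
    unfolding e_def by auto
  have e0: "e 0 = u" "e (Suc n1) = q" "e n1 = p" using w1 unfolding e_def ext_def by auto
  have j2: "0 < Suc n1 \<and> 0 < n2 \<longrightarrow> e (Suc n1 - 1) \<noteq> w2 1"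
  proof
    assume a: "0 < Suc n1 \<and> 0 < n2"
    have "tdist V adj (w2 1) (w2 n2) = n2 - 1" using nb_dist_sub[OF w2(1,2), of 1 n2] a by simp
    moreover have "tdist V adj x p = tdist V adj p x" using tdist_sym[OF xV pV(1)] .
    moreover have "tdist V adj x q = n2" using tdist_sym[OF xV pV(2)] unfolding n2_def by simp
    ultimately have "w2 1 \<noteq> p" using dx w2(4) by auto
    then show "e (Suc n1 - 1) \<noteq> w2 1" using e0(3) by simp
  qed
  have W: "walk V adj (catw e (Suc n1) w2) (Suc n1 + n2)" using catw_walk[OF e(1) w2(1)] e0 w2(3) by simp
  have N: "nbk (catw e (Suc n1) w2) (Suc n1 + n2)" using catw_nbk[OF e(2) w2(2)] e0 w2(3) j2 by simp
  have "tdist V adj (catw e (Suc n1) w2 0) (catw e (Suc n1) w2 (Suc n1 + n2)) = Suc n1 + n2"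
    by (rule nb_dist[OF W N])
  moreover have "catw e (Suc n1) w2 0 = u" using e0 unfolding catw_def by simp
  moreover have "catw e (Suc n1) w2 (Suc n1 + n2) = x" using e0 w2 unfolding catw_def by (cases n2) auto
  ultimately show ?thesis unfolding n1_def n2_def by simp
qed

lemma conv_Z0c: assumes pq: "adj p q" shows "convex V adj (V - Z0 V adj (p,q))"
  unfolding convex_def
proof (intro allI impI)
  fix w n i assume w: "walk V adj w n" "nbk w n" "w 0 \<in> V - Z0 V adj (p,q)" "w n \<in> V - Z0 V adj (p,q)"
    and i: "i \<le> n"
  have pV: "p \<in> V" "q \<in> V" using adj_V pq by auto
  show "w i \<in> V - Z0 V adj (p, q)"
  proof -
    have xV: "w i \<in> V" using w(1) i unfolding walk_def by auto
    show "w i \<in> V - Z0 V adj (p, q)"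
    proof (rule ccontr)
      assume "w i \<notin> V - Z0 V adj (p, q)"
      then have x: "w i \<in> Z0 V adj (p,q)" using xV by simp
      define u where "u = w 0"
      define v where "v = w n"
      have uV: "u \<in> V" "v \<in> V" using w(3,4) unfolding u_def v_def by auto
      have du: "tdist V adj u q = tdist V adj u p + 1" using w(3) dist_step[OF pq uV(1)] unfolding u_def by (auto simp: Z0_iff)
      have dv: "tdist V adj v q = tdist V adj v p + 1" using w(4) dist_step[OF pq uV(2)] unfolding v_def by (auto simp: Z0_iff)
      have dx: "tdist V adj (w i) p = tdist V adj (w i) q + 1" using Z0_step[OF pq x] .
      have J1: "tdist V adj u (w i) = tdist V adj u p + 1 + tdist V adj q (w i)" by (rule junction[OF pq uV(1) xV du dx])
      have J2: "tdist V adj v (w i) = tdist V adj v p + 1 + tdist V adj q (w i)" by (rule junction[OF pq uV(2) xV dv dx])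
      have s1: "tdist V adj u (w i) = i" using nb_dist_sub[OF w(1,2), of 0 i] i unfolding u_def by simp
      have s2: "tdist V adj (w i) v = n - i" using nb_dist_sub[OF w(1,2), of i n] i unfolding v_def by simp
      have s3: "tdist V adj u v = n" using nb_dist[OF w(1,2)] unfolding u_def v_def by simp
      have tri: "tdist V adj u v \<le> tdist V adj u p + tdist V adj p v" by (rule tdist_tri[OF uV(1) pV(1) uV(2)])
      have "tdist V adj p v = tdist V adj v p" using tdist_sym[OF pV(1) uV(2)] .
      moreover have "tdist V adj (w i) v = tdist V adj v (w i)" using tdist_sym[OF xV uV(2)] .
      ultimately show False using J1 J2 s1 s2 s3 tri i by linarith
    qed
  qed
qed

end

lemma minimal_conv:
  assumes act: "acts_on_tree G V adj \<phi>" and min: "minimal_action G V adj \<phi>"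
    and W: "W \<subseteq> V" "W \<noteq> {}" "convex V adj W" and inv: "\<forall>g\<in>carrier G. \<forall>v\<in>W. \<phi> g v \<in> W"
  shows "W = V"
proof -
  interpret tree V adj using act unfolding acts_on_tree_def by (simp add: tree_def)
  have "subtree V adj W" by (rule conv_subtree[OF W])
  moreover have "\<forall>g\<in>carrier G. \<phi> g ` W \<subseteq> W" using inv by blast
  ultimately show ?thesis using min unfolding minimal_action_def by blast
qed


lemma act_tree: "acts_on_tree G V adj \<phi> \<Longrightarrow> tree V adj"
  unfolding acts_on_tree_def tree_def by simp
lemma act_aut: "acts_on_tree G V adj \<phi> \<Longrightarrow> g \<in> carrier G \<Longrightarrow> is_automorphism V adj (\<phi> g)"
  unfolding acts_on_tree_def by simp

lemma NL2_from:
  assumes act: "acts_on_tree G V adj \<phi>" and min: "minimal_action G V adj \<phi>" and h: "hyperbolic V adj h"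
  shows "\<forall>v\<in>V. \<exists>x y. adj v x \<and> adj v y \<and> x \<noteq> y"
proof -
  interpret tree V adj using act_tree[OF act] .
  define W1 where "W1 = {v\<in>V. \<exists>x y. adj v x \<and> adj v y \<and> x \<noteq> y}"
  have conv: "convex V adj W1" unfolding convex_def
  proof (intro allI impI)
    fix w n i assume w: "walk V adj w n" "nbk w n" "w 0 \<in> W1" "w n \<in> W1" and i: "i \<le> n"
    show "w i \<in> W1"
    proof (cases "i = 0 \<or> i = n")
      case True then show ?thesis using w by auto
    next
      case False
      then have i': "0 < i" "i < n" using i by auto
      obtain j where j: "i = Suc j" using i' by (cases i) auto
      have "adj (w j) (w (Suc j))" using w(1) i' j unfolding walk_def by auto
      then have a1: "adj (w i) (w j)" using j adj_sym by simp
      have a2: "adj (w i) (w (Suc i))" using w(1) i' unfolding walk_def by auto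
      have "j + 2 \<le> n" using i' j by simp
      then have "w j \<noteq> w (j+2)" using w(2) unfolding nbk_def by blast
      then have ne: "w j \<noteq> w (Suc i)" using j by simp
      have "w i \<in> V" using w(1) i unfolding walk_def by auto
      then show ?thesis unfolding W1_def using a1 a2 ne by blast
    qed
  qed
  have ne: "W1 \<noteq> {}"
  proof
    assume E: "W1 = {}"
    have f: "is_automorphism V adj h" using hyp_aut[OF h] .
    obtain v where v: "v \<in> V" using V_ne by blast
    have hv: "h v \<in> V" "h v \<noteq> v" using aut_V[OF f v] hyp_nofix[OF h v] by auto
    define n where "n = tdist V adj v (h v)"
    obtain w where w: "walk V adj w n" "nbk w n" "w 0 = v" "w n = h v"
      using geo_ex[OF v hv(1)] unfolding n_def by blast
    have n0: "n \<noteq> 0" using tdist_zero[OF v hv(1)] hv(2) unfolding n_def by auto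
    show False
    proof (cases "n = 1")
      case True
      have a: "adj v (h v)" using tdist_one[OF v hv(1)] True unfolding n_def by simp
      have "adj (h v) (h (h v))" using aut_adj[OF f a] .
      moreover have "adj (h v) v" using adj_sym[OF a] .
      moreover have "h v \<notin> W1" using E by simp
      ultimately have "h (h v) = v" using hv(1) unfolding W1_def by blast
      then show False using hyp_noinv[OF h a] by simp
    next
      case False
      then have n2: "2 \<le> n" using n0 by simp
      have a1: "adj (w 1) (w 0)" using w(1) n2 adj_sym unfolding walk_def by auto
      have a2: "adj (w 1) (w (Suc (Suc 0)))" using w(1) n2 unfolding walk_def by auto
      have "0 + 2 \<le> n" using n2 by simp
      then have "w 0 \<noteq> w (0+2)" using w(2) unfolding nbk_def by blast
      then have "w 0 \<noteq> w (Suc (Suc 0))" by simp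
      moreover have "w 1 \<in> V" using w(1) n2 unfolding walk_def by auto
      ultimately have "w 1 \<in> W1" unfolding W1_def using a1 a2 by auto
      then show False using E by simp
    qed
  qed
  have inv: "\<forall>g\<in>carrier G. \<forall>v\<in>W1. \<phi> g v \<in> W1"
  proof (intro ballI)
    fix g v assume g: "g \<in> carrier G" and v: "v \<in> W1"
    have f: "is_automorphism V adj (\<phi> g)" using act_aut[OF act g] .
    obtain x y where xy: "adj v x" "adj v y" "x \<noteq> y" using v unfolding W1_def by blast
    have "\<phi> g x \<noteq> \<phi> g y" using aut_inj[OF f] xy adj_V by blast
    moreover have "adj (\<phi> g v) (\<phi> g x)" "adj (\<phi> g v) (\<phi> g y)" using aut_adj[OF f] xy by auto
    moreover have "\<phi> g v \<in> V" using aut_V[OF f] v unfolding W1_def by auto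
    ultimately show "\<phi> g v \<in> W1" unfolding W1_def by blast
  qed
  have "W1 = V" by (rule minimal_conv[OF act min _ ne conv inv]) (auto simp: W1_def)
  then show ?thesis unfolding W1_def by blast
qed

lemma three_aut: assumes "tree V adj" "is_automorphism V adj f" "three adj c" shows "three adj (f c)"
proof -
  interpret tree V adj by fact
  obtain x y z where xyz: "adj c x" "adj c y" "adj c z" "x \<noteq> y" "x \<noteq> z" "y \<noteq> z"
    using assms(3) unfolding three_def by blast
  have V: "x \<in> V" "y \<in> V" "z \<in> V" using xyz adj_V by auto
  show ?thesis unfolding three_def
    using aut_adj[OF assms(2)] xyz aut_inj[OF assms(2)] V by metis
qed

lemma DEG_from:
  assumes act: "acts_on_tree G V adj \<phi>" and min: "minimal_action G V adj \<phi>"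
    and sh: "strongly_hyperbolic G V adj \<phi>" and pq: "adj p q"
  shows "\<exists>c \<in> Z0 V adj (p,q). three adj c"
proof (rule ccontr)
  assume H0: "\<not> (\<exists>c \<in> Z0 V adj (p,q). three adj c)"
  interpret tree V adj using act_tree[OF act] .
  obtain g1 g2 where g: "g1 \<in> carrier G" "g2 \<in> carrier G" "hyperbolic V adj (\<phi> g1)" "hyperbolic V adj (\<phi> g2)"
    "fixed_points V adj (\<phi> g1) \<inter> fixed_points V adj (\<phi> g2) = {}"
    using sh unfolding strongly_hyperbolic_def by blast
  have NL2: "\<forall>v\<in>V. \<exists>x y. adj v x \<and> adj v y \<and> x \<noteq> y" using NL2_from[OF act min g(3)] .
  define H where "H = {f \<in> edges V adj. \<forall>c\<in>Z0 V adj f. \<not> three adj c}"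
  define U where "U = (\<Union>f\<in>H. Z0 V adj f)"
  define Wh where "Wh = V - U"
  have pqH: "(p,q) \<in> H" using H0 pq adj_V unfolding H_def edges_def by auto
  have qV: "q \<in> V" using adj_V pq by auto
  have qZ: "q \<in> Z0 V adj (p,q)" unfolding Z0_iff using tdist_refl[OF qV] tdist_adj[OF adj_sym[OF pq]] qV by simp
  have qU: "q \<in> U" using pqH qZ unfolding U_def by blast
  show False
  proof (cases "Wh = {}")
    case True
    have N3: "\<not> three adj c" for c
    proof
      assume t: "three adj c"
      then have "c \<in> V" using three_V by blast
      then have "c \<in> U" using True unfolding Wh_def by blast
      then obtain f where "f \<in> H" "c \<in> Z0 V adj f" unfolding U_def by blast
      then show False using t unfolding H_def by blast
    qed
    show False using line_false[OF N3 NL2 g(3,4,5)] .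
  next
    case False
    have conv: "convex V adj Wh" unfolding convex_def
    proof (intro allI impI)
      fix w n i assume w: "walk V adj w n" "nbk w n" "w 0 \<in> Wh" "w n \<in> Wh" and i: "i \<le> n"
      have "w i \<in> V" using w(1) i unfolding walk_def by auto
      moreover have "w i \<notin> Z0 V adj f" if f: "f \<in> H" for f
      proof -
        obtain a b where ab: "f = (a,b)" by (cases f)
        have ab': "adj a b" using f ab unfolding H_def edges_def by auto
        have "w 0 \<in> V - Z0 V adj (a,b)" "w n \<in> V - Z0 V adj (a,b)" using w(3,4) f ab unfolding Wh_def U_def by auto
        then have "w i \<in> V - Z0 V adj (a,b)" using conv_Z0c[OF ab'] w(1,2) i unfolding convex_def by blast
        then show ?thesis using ab by simp
      qed
      ultimately show "w i \<in> Wh" unfolding Wh_def U_def by blast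
    qed
    have inv: "\<forall>g\<in>carrier G. \<forall>v\<in>Wh. \<phi> g v \<in> Wh"
    proof (intro ballI)
      fix g v assume gc: "g \<in> carrier G" and v: "v \<in> Wh"
      define f where "f = \<phi> g"
      have fa: "is_automorphism V adj f" using act_aut[OF act gc] unfolding f_def .
      define \<psi> where "\<psi> = inv_into V f"
      have pa: "is_automorphism V adj \<psi>" using aut_inv[OF fa] unfolding \<psi>_def .
      have vV: "v \<in> V" using v unfolding Wh_def by auto
      have fvV: "f v \<in> V" using aut_V[OF fa vV] .
      show "\<phi> g v \<in> Wh" unfolding f_def[symmetric]
      proof (rule ccontr)
        assume "f v \<notin> Wh"
        then obtain e where e: "e \<in> H" "f v \<in> Z0 V adj e" using fvV unfolding Wh_def U_def by blast
        obtain p' q' where pq': "e = (p',q')" by (cases e)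
        have a': "adj p' q'" using e(1) pq' unfolding H_def edges_def by auto
        have V': "p' \<in> V" "q' \<in> V" using adj_V a' by auto
        have pV': "\<psi> p' \<in> V" "\<psi> q' \<in> V" using aut_V[OF pa] V' by auto
        have fpsi: "f (\<psi> p') = p'" "f (\<psi> q') = q'" using aut_inv_right[OF fa] V' unfolding \<psi>_def by auto
        have dd: "tdist V adj (f c) p' = tdist V adj c (\<psi> p')" "tdist V adj (f c) q' = tdist V adj c (\<psi> q')"
          if "c \<in> V" for c
          using aut_dist[OF fa that pV'(1)] aut_dist[OF fa that pV'(2)] fpsi by auto
        have eH: "(\<psi> p', \<psi> q') \<in> H" unfolding H_def
        proof (intro CollectI conjI ballI)
          show "(\<psi> p', \<psi> q') \<in> edges V adj" unfolding edges_def using aut_adj[OF pa a'] pV' by auto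
        next
          fix c assume c: "c \<in> Z0 V adj (\<psi> p', \<psi> q')"
          have cV: "c \<in> V" using c unfolding Z0_iff by auto
          have "f c \<in> Z0 V adj (p', q')" using c dd[OF cV] aut_V[OF fa cV] unfolding Z0_iff by simp
          then have "\<not> three adj (f c)" using e(1) pq' unfolding H_def by blast
          then show "\<not> three adj c" using three_aut[OF act_tree[OF act] fa] by blast
        qed
        have "v \<in> Z0 V adj (\<psi> p', \<psi> q')" using e(2) pq' dd[OF vV] vV by (auto simp: Z0_iff)
        then have "v \<in> U" using eH unfolding U_def by blast
        then show False using v unfolding Wh_def by blast
      qed
    qed
    have "Wh = V" by (rule minimal_conv[OF act min _ False conv inv]) (auto simp: Wh_def)
    then show False using qU qV unfolding Wh_def by blast
  qed
qed


lemma main_fix: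
  assumes act: "acts_on_tree G V adj \<phi>" and min: "minimal_action G V adj \<phi>"
    and sh: "strongly_hyperbolic G V adj \<phi>" and ab: "adj a b"
    and f: "is_automorphism V adj f" and F: "\<forall>x \<in> ZB V adj (a,b). (\<lambda>s. f \<circ> s) ` x = x"
  shows "\<forall>v\<in>Z0 V adj (a,b). f v = v"
proof
  fix v assume v: "v \<in> Z0 V adj (a,b)"
  interpret tree V adj using act_tree[OF act] .
  obtain g1 where g1: "g1 \<in> carrier G" "hyperbolic V adj (\<phi> g1)"
    using sh unfolding strongly_hyperbolic_def by blast
  have NL2: "\<forall>v\<in>V. \<exists>x y. adj v x \<and> adj v y \<and> x \<noteq> y" using NL2_from[OF act min g1(2)] .
  have NL: "\<exists>z. adj v z \<and> z \<noteq> q" if "adj v q" for v q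
    using NL2 that adj_V by metis
  have DEG: "\<exists>c \<in> Z0 V adj (p,q). three adj c" if "adj p q" for p q using DEG_from[OF act min sh that] .
  obtain c where c: "c \<in> Z0 V adj (a,b)" "f c = c" using tripod[OF NL DEG ab f F] by blast
  have "f b = b" using fix_c_imp_b[OF NL ab f F c] .
  then show "f v = v" using fix_b_imp[OF NL ab f F _ v] by simp
qed

lemma (in tree) fixZ0_ZB:
  assumes ab: "adj a b" and f: "is_automorphism V adj f" and F: "\<forall>v\<in>Z0 V adj (a,b). f v = v"
    and c: "c \<in> ZB V adj (a,b)"
  shows "(\<lambda>s. f \<circ> s) ` c = c"
proof -
  obtain r j where r: "r \<in> c" "r j = a" "r (Suc j) = b" and cb: "c \<in> boundary V adj"
    using c unfolding ZB_def by auto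
  have rr: "is_ray V adj r" using boundary_ray[OF cb r(1)] .
  have ceq: "c = cls V adj r" using boundary_cls[OF cb r(1)] .
  have aV: "a \<in> V" "b \<in> V" using adj_V ab by auto
  have "\<forall>i. r (i + Suc j) = f (r (i + Suc j))"
  proof
    fix i
    have d1: "tdist V adj (r j) (r (j + Suc i)) = Suc i" using ray_dist[OF rr] .
    have d2: "tdist V adj (r (Suc j)) (r (Suc j + i)) = i" using ray_dist[OF rr] .
    have xV: "r (i + Suc j) \<in> V" using ray_V[OF rr] .
    have "tdist V adj (r (i + Suc j)) a = Suc i" using d1 r(2) tdist_sym[OF aV(1) xV] by (simp add: ac_simps)
    moreover have "tdist V adj (r (i + Suc j)) b = i" using d2 r(3) tdist_sym[OF aV(2) xV] by (simp add: ac_simps)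
    ultimately have "r (i + Suc j) \<in> Z0 V adj (a,b)" using xV unfolding Z0_iff by simp
    then show "r (i + Suc j) = f (r (i + Suc j))" using F by simp
  qed
  then have "cofinal r (f \<circ> r)" unfolding cofinal_def comp_def by blast
  then show ?thesis using fix_cls[OF f rr] ceq by simp
qed

lemma fixZ:
  assumes act: "acts_on_tree G V adj \<phi>" and min: "minimal_action G V adj \<phi>"
    and sh: "strongly_hyperbolic G V adj \<phi>" and ab: "adj a b" and h: "h \<in> carrier G"
    and F: "\<forall>x \<in> Inr ` ZB V adj (a,b). act_pt (\<phi> h) x = x"
  shows "\<forall>x \<in> Z V adj (a,b). act_pt (\<phi> h) x = x"
proof -
  have F': "\<forall>x \<in> ZB V adj (a,b). (\<lambda>s. \<phi> h \<circ> s) ` x = x" using F unfolding act_pt_def by auto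
  have "\<forall>v\<in>Z0 V adj (a,b). \<phi> h v = v" using main_fix[OF act min sh ab act_aut[OF act h] F'] .
  then show ?thesis using F unfolding Z_def act_pt_def by auto
qed

theorem mainTheorem9:
  fixes G :: "('g, 'b) monoid_scheme" and V :: "'v set" and adj :: "'v \<Rightarrow> 'v \<Rightarrow> bool"
    and \<phi> :: "'g \<Rightarrow> 'v \<Rightarrow> 'v" and e :: "'v \<times> 'v" and g :: 'g
  assumes "acts_on_tree G V adj \<phi>"
    and "minimal_action G V adj \<phi>"
    and "strongly_hyperbolic G V adj \<phi>"
    and "e \<in> edges V adj"
    and "g \<in> carrier G"
    and "\<forall>x \<in> Inr ` ZB V adj e. act_pt (\<phi> g) x = x"
  shows "(\<forall>x \<in> Z V adj e. act_pt (\<phi> g) x = x)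
    \<and> fixator G \<phi> (Inl ` Z0 V adj e) = fixator G \<phi> (Inr ` ZB V adj e)
    \<and> fixator G \<phi> (Inr ` ZB V adj e) = fixator G \<phi> (Z V adj e \<inter> boundary_closure V adj)"
proof -
  note act = assms(1) and min = assms(2) and sh = assms(3)
  interpret tree V adj using act_tree[OF act] .
  obtain a b where e: "e = (a,b)" by (cases e)
  have ab: "adj a b" using assms(4) e unfolding edges_def by auto
  have P1: "\<forall>x \<in> Z V adj e. act_pt (\<phi> g) x = x" using fixZ[OF act min sh ab assms(5)] assms(6) e by simp
  have fZ: "\<forall>x \<in> Z V adj e. act_pt (\<phi> h) x = x" if "h \<in> fixator G \<phi> (Inr ` ZB V adj e)" for h
    using fixZ[OF act min sh ab, of h] that e unfolding fixator_def by simp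
  have P2: "fixator G \<phi> (Inl ` Z0 V adj e) = fixator G \<phi> (Inr ` ZB V adj e)"
  proof
    show "fixator G \<phi> (Inl ` Z0 V adj e) \<subseteq> fixator G \<phi> (Inr ` ZB V adj e)"
    proof
      fix h assume h: "h \<in> fixator G \<phi> (Inl ` Z0 V adj e)"
      have hc: "h \<in> carrier G" using h unfolding fixator_def by auto
      have "\<forall>v\<in>Z0 V adj (a,b). \<phi> h v = v" using h e unfolding fixator_def act_pt_def by auto
      then have "(\<lambda>s. \<phi> h \<circ> s) ` c = c" if "c \<in> ZB V adj (a,b)" for c
        using fixZ0_ZB[OF ab act_aut[OF act hc] _ that] by simp
      then show "h \<in> fixator G \<phi> (Inr ` ZB V adj e)" using hc e unfolding fixator_def act_pt_def by auto
    qed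
  next
    show "fixator G \<phi> (Inr ` ZB V adj e) \<subseteq> fixator G \<phi> (Inl ` Z0 V adj e)"
    proof
      fix h assume h: "h \<in> fixator G \<phi> (Inr ` ZB V adj e)"
      then show "h \<in> fixator G \<phi> (Inl ` Z0 V adj e)" using fZ[OF h] unfolding fixator_def Z_def by auto
    qed
  qed
  have sub: "Inr ` ZB V adj e \<subseteq> boundary_closure V adj"
  proof -
    have "Inr ` boundary V adj \<subseteq> topspace (shadow_topology V adj)"
      unfolding shadow_topology_def points_def by auto
    then have "Inr ` boundary V adj \<subseteq> boundary_closure V adj"
      unfolding boundary_closure_def by (rule closure_of_subset)
    moreover have "ZB V adj e \<subseteq> boundary V adj" unfolding ZB_def by auto
    ultimately show ?thesis by auto
  qed
  have P3: "fixator G \<phi> (Inr ` ZB V adj e) = fixator G \<phi> (Z V adj e \<inter> boundary_closure V adj)"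
  proof
    show "fixator G \<phi> (Inr ` ZB V adj e) \<subseteq> fixator G \<phi> (Z V adj e \<inter> boundary_closure V adj)"
    proof
      fix h assume h: "h \<in> fixator G \<phi> (Inr ` ZB V adj e)"
      then show "h \<in> fixator G \<phi> (Z V adj e \<inter> boundary_closure V adj)" using fZ[OF h] unfolding fixator_def by auto
    qed
  next
    show "fixator G \<phi> (Z V adj e \<inter> boundary_closure V adj) \<subseteq> fixator G \<phi> (Inr ` ZB V adj e)"
      using sub unfolding fixator_def Z_def by auto
  qed
  show ?thesis using P1 P2 P3 by blast
qed


end
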